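(* Let $E\in\mathscr K$ with endpoints $l,r$ and associated interval $I$. (1) A function $\mathbf s$ on $E$ belongs to $\mathscr S$ if and only if there is a unique (up to Lebesgue-null sets) $G\in\mathscr H$ such that $\mathbf s(x)=\mathbf s(e)+\int_e^x 1_{G\cup(I\setminus E)}(y)\,dy$ for $x\in E$, where $e\in E$ is an arbitrary fixed point. (2) A function $\bar{\mathbf s}$ on $I$ belongs to $\overline{\mathscr S}$ if and only if there is a unique (up to Lebesgue-null sets) $\bar G\in\overline{\mathscr H}$ such that $\bar{\mathbf s}(x)=\bar{\mathbf s}(e)+\int_e^x 1_{\bar G}(y)\,dy$ for $x\in I$, where $e\in I$ is an arbitrary fixed point. (3) In this notation, if $\bar{\mathbf s}\in\overline{\mathscr S}$ is the extended scale function of $\mathbf s\in\mathscr S$, then $\bar G=G\cup(I\setminus E)$ and $G=\bar G\cap E$.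
   Context: $\mathscr K$ is the family of $E\subset\mathbb R$ with $E\cup\{l,r\}$ closed in $[-\infty,\infty]$, $l=\inf E<r=\sup E$. $I$ is the interval with endpoints $l,r$ containing $l$ (resp. $r$) iff $l\in E$ (resp. $r\in E$); $I\setminus E=\bigcup_k(a_k,b_k)$ disjoint open intervals. For a continuous strictly increasing $\mathbf s$ on $E$, its extended scale function $\bar{\mathbf s}$ equals $\mathbf s$ on $E$ and is linear on each $(a_k,b_k)$ interpolating $\mathbf s(a_k),\mathbf s(b_k)$. $\overline{\mathscr S}$ is the set of absolutely continuous strictly increasing functions $\bar{\mathbf s}$ on $I$ with $\bar{\mathbf s}'\in\{0,1\}$ a.e. and $\bar{\mathbf s}'=1$ on $I\setminus E$; $\mathscr S=\{\bar{\mathbf s}|_E:\bar{\mathbf s}\in\overline{\mathscr S}\}$. $\overline{\mathscr H}$ is the family of sets $\bar G\subset I$ with $I\setminus E\subset\bar G$ and $|\bar G\cap(c,d)|>0$ for every interval $(c,d)\subset I$ ($|\cdot|$ Lebesgue measure), and $\mathscr H=\{\bar G\cap E:\bar G\in\overline{\mathscr H}\}$; elements are regarded as Lebesgue-a.e. equivalence classes. *)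

theory Defs
  imports "HOL-Analysis.Analysis"
begin

definition lend :: "real set \<Rightarrow> ereal" where
  "lend E = Inf (ereal ` E)"

definition rend :: "real set \<Rightarrow> ereal" where
  "rend E = Sup (ereal ` E)"

definition classK :: "real set \<Rightarrow> bool" where
  "classK E \<longleftrightarrow> lend E < rend E \<and> closed (ereal ` E \<union> {lend E, rend E})"

definition intI :: "real set \<Rightarrow> real set" where
  "intI E = {x. lend E < ereal x \<and> ereal x < rend E} \<union>
            {x \<in> E. ereal x = lend E \<or> ereal x = rend E}"

definition abs_cont_on :: "real set \<Rightarrow> (real \<Rightarrow> real) \<Rightarrow> bool" where
  "abs_cont_on S f \<longleftrightarrow>
     (\<forall>\<epsilon>>0. \<exists>\<delta>>0. \<forall>(n::nat) (a::nat \<Rightarrow> real) (b::nat \<Rightarrow> real).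
        (\<forall>i<n. a i \<le> b i \<and> {a i..b i} \<subseteq> S) \<and>
        (\<forall>i<n. \<forall>j<n. i \<noteq> j \<longrightarrow> b i \<le> a j \<or> b j \<le> a i) \<and>
        (\<Sum>i<n. b i - a i) < \<delta>
        \<longrightarrow> (\<Sum>i<n. \<bar>f (b i) - f (a i)\<bar>) < \<epsilon>)"

definition loc_abs_cont_on :: "real set \<Rightarrow> (real \<Rightarrow> real) \<Rightarrow> bool" where
  "loc_abs_cont_on I f \<longleftrightarrow> (\<forall>a b. {a..b} \<subseteq> I \<longrightarrow> abs_cont_on {a..b} f)"

text \<open>The extended scale function: equal to s on E, linear on each gap (a_k,b_k)
  of I \<setminus> E, interpolating s(a_k), s(b_k).  For x in a gap, a_k and b_k are the
  nearest points of E to the left and right of x.\<close>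
definition ext_scale :: "real set \<Rightarrow> (real \<Rightarrow> real) \<Rightarrow> real \<Rightarrow> real" where
  "ext_scale E s x =
     (if x \<in> E then s x
      else (let a = Sup {y \<in> E. y < x}; b = Inf {y \<in> E. x < y}
            in s a + (s b - s a) * (x - a) / (b - a)))"

definition Sbar :: "real set \<Rightarrow> (real \<Rightarrow> real) set" where
  "Sbar E = {sb. loc_abs_cont_on (intI E) sb \<and> strict_mono_on (intI E) sb \<and>
     (AE x in lebesgue. x \<in> intI E \<longrightarrow>
        ((sb has_real_derivative 0) (at x within intI E) \<or>
         (sb has_real_derivative 1) (at x within intI E))) \<and>
     (\<forall>x \<in> intI E - E. (sb has_real_derivative 1) (at x within intI E))}"

text \<open>The class S: restrictions to E of elements of S-bar (functions are
  compared on E only).\<close>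
definition Sc :: "real set \<Rightarrow> (real \<Rightarrow> real) set" where
  "Sc E = {s. \<exists>sb \<in> Sbar E. \<forall>x \<in> E. s x = sb x}"

definition Hbar :: "real set \<Rightarrow> real set set" where
  "Hbar E = {G. G \<in> sets lebesgue \<and> G \<subseteq> intI E \<and> intI E - E \<subseteq> G \<and>
     (\<forall>c d. c < d \<and> {c<..<d} \<subseteq> intI E \<longrightarrow> emeasure lebesgue (G \<inter> {c<..<d}) > 0)}"

definition Hc :: "real set \<Rightarrow> real set set" where
  "Hc E = {G \<inter> E | G. G \<in> Hbar E}"

definition ae_eq :: "real set \<Rightarrow> real set \<Rightarrow> bool" where
  "ae_eq A B \<longleftrightarrow> (A - B) \<union> (B - A) \<in> null_sets lebesgue"

end

theory Submission
  imports Defs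
begin

lemma density_bad_negligible:
  fixes A :: "real set"
  assumes A: "A \<in> sets lebesgue" and eps: "\<epsilon> > 0"
  shows "negligible {x. x \<notin> A \<and> \<bar>x\<bar> < m \<and>
     (\<forall>d>0. \<exists>h. 0<h \<and> h<d \<and> \<epsilon> * (2*h) \<le> measure lebesgue (A \<inter> ball x h))}"
    (is "negligible ?S")
proof -
  have "\<exists>T. ?S \<subseteq> T \<and> T \<in> lmeasurable \<and> measure lebesgue T \<le> e" if e: "e > 0" for e
  proof -
    define C where "C = (UNIV - A) \<inter> ball 0 m"
    have Cm: "C \<in> sets lebesgue" using A unfolding C_def
      by (intro sets.Int sets.Diff) (auto intro: fmeasurableD)
    obtain U0 where U0: "open U0" "C \<subseteq> U0" "U0 - C \<in> lmeasurable"
        "emeasure lebesgue (U0 - C) < ennreal (e*\<epsilon>)"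
      using sets_lebesgue_outer_open[OF Cm, of "e*\<epsilon>"] e eps by auto
    define U where "U = U0 \<inter> ball 0 m"
    have oU: "open U" using U0 by (auto simp: U_def)
    have SU: "?S \<subseteq> U" using U0(2) by (auto simp: U_def C_def)
    define K where "K = {(x,h). x \<in> ?S \<and> 0 < h \<and> ball x h \<subseteq> U \<and>
         \<epsilon> * (2*h) \<le> measure lebesgue (A \<inter> ball x h)}"
    have fine: "\<exists>i. i \<in> K \<and> x \<in> ball (fst i) (snd i) \<and> snd i < d"
      if x: "x \<in> ?S" and d: "0 < d" for x d
    proof -
      obtain \<rho> where \<rho>: "\<rho> > 0" "ball x \<rho> \<subseteq> U" using oU SU x openE by blast
      obtain h where h: "0<h" "h < min d \<rho>" "\<epsilon> * (2*h) \<le> measure lebesgue (A \<inter> ball x h)"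
        using x d \<rho> by (smt (verit, del_insts) mem_Collect_eq)
      have "ball x h \<subseteq> U" using \<rho> h by (meson dual_order.trans min.strict_boundedE less_imp_le subset_ball)
      then show ?thesis using h x by (intro exI[of _ "(x,h)"]) (auto simp: K_def)
    qed
    obtain Cc where Cc: "countable Cc" "Cc \<subseteq> K"
        "pairwise (\<lambda>i j. disjnt (ball (fst i) (snd i)) (ball (fst j) (snd j))) Cc"
        "negligible (?S - (\<Union>i\<in>Cc. ball (fst i) (snd i)))"
      using Vitali_covering_theorem_balls[of ?S K fst snd] fine by blast
    define V where "V = (\<Union>i\<in>Cc. ball (fst i) (snd i))"
    have VU: "V \<subseteq> U"
    proof
      fix y assume "y \<in> V"
      then obtain i where i: "i \<in> Cc" "y \<in> ball (fst i) (snd i)" by (auto simp: V_def)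
      have "i \<in> K" using i Cc(2) by blast
      then have "ball (fst i) (snd i) \<subseteq> U" unfolding K_def by (cases i) simp
      then show "y \<in> U" using i by blast
    qed
    have Vl: "V \<in> lmeasurable"
      by (rule lmeasurable_open) (use VU in \<open>auto simp: V_def U_def intro: bounded_subset[of "ball 0 m"]\<close>)
    have disj: "disjoint_family_on (\<lambda>i. ball (fst i) (snd i)) Cc"
      using Cc(3) unfolding disjoint_family_on_def pairwise_def disjnt_def by blast
    have disj2: "disjoint_family_on (\<lambda>i. A \<inter> ball (fst i) (snd i)) Cc"
      using disj unfolding disjoint_family_on_def by blast
    have "emeasure lebesgue V = (\<integral>\<^sup>+i. emeasure lebesgue (ball (fst i) (snd i)) \<partial>count_space Cc)"
      unfolding V_def by (rule emeasure_UN_countable) (use Cc disj in auto)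
    also have "\<dots> \<le> (\<integral>\<^sup>+i. ennreal (1/\<epsilon>) * emeasure lebesgue (A \<inter> ball (fst i) (snd i)) \<partial>count_space Cc)"
    proof (rule nn_integral_mono)
      fix i assume "i \<in> space (count_space Cc)"
      then have i: "i \<in> K" using Cc(2) by auto
      obtain x h where xh: "i = (x,h)" by force
      have h: "0 < h" "\<epsilon> * (2*h) \<le> measure lebesgue (A \<inter> ball x h)" using i by (auto simp: xh K_def)
      have fm: "A \<inter> ball x h \<in> lmeasurable"
        using fmeasurable_Int_fmeasurable[OF lmeasurable_ball A] by (simp add: Int_commute)
      have "emeasure lebesgue (ball x h) = ennreal (2*h)"
        using h by (simp add: ball_eq_greaterThanLessThan)
      also have "\<dots> \<le> ennreal ((1/\<epsilon>) * measure lebesgue (A \<inter> ball x h))"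
        using h eps by (intro ennreal_leI) (simp add: field_simps)
      also have "\<dots> = ennreal (1/\<epsilon>) * emeasure lebesgue (A \<inter> ball x h)"
        using eps by (simp add: emeasure_eq_measure2[OF fm] ennreal_mult[symmetric])
      finally show "emeasure lebesgue (ball (fst i) (snd i)) \<le> ennreal (1/\<epsilon>) * emeasure lebesgue (A \<inter> ball (fst i) (snd i))"
        by (simp add: xh)
    qed
    also have "\<dots> = ennreal (1/\<epsilon>) * (\<integral>\<^sup>+i. emeasure lebesgue (A \<inter> ball (fst i) (snd i)) \<partial>count_space Cc)"
      by (rule nn_integral_cmult) auto
    also have "(\<integral>\<^sup>+i. emeasure lebesgue (A \<inter> ball (fst i) (snd i)) \<partial>count_space Cc)
        = emeasure lebesgue (\<Union>i\<in>Cc. A \<inter> ball (fst i) (snd i))"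
      by (rule emeasure_UN_countable[symmetric]) (use Cc disj2 A in auto)
    also have "\<dots> \<le> emeasure lebesgue (U0 - C)"
    proof (rule emeasure_mono)
      show "(\<Union>i\<in>Cc. A \<inter> ball (fst i) (snd i)) \<subseteq> U0 - C"
        using VU by (auto simp: V_def U_def C_def)
    qed (use U0 in auto)
    finally have "emeasure lebesgue V \<le> ennreal (1/\<epsilon>) * emeasure lebesgue (U0 - C)"
      by (simp add: mult_left_mono)
    also have "\<dots> \<le> ennreal (1/\<epsilon>) * ennreal (e*\<epsilon>)"
      using U0(4) by (intro mult_left_mono) auto
    also have "\<dots> = ennreal e" using eps e by (simp add: ennreal_mult[symmetric])
    finally have "ennreal (measure lebesgue V) \<le> ennreal e" by (simp add: emeasure_eq_measure2[OF Vl])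
    then have mV: "measure lebesgue V \<le> e" using e by (simp add: ennreal_le_iff)
    define T where "T = V \<union> (?S - V)"
    have negl: "negligible (?S - V)" using Cc(4) by (simp add: V_def)
    have Tl: "T \<in> lmeasurable" unfolding T_def
      using Vl negligible_imp_measurable[OF negl] by (intro fmeasurable.Un) auto
    have "measure lebesgue T \<le> measure lebesgue V + measure lebesgue (?S - V)"
      unfolding T_def using Vl negligible_imp_measurable[OF negl] by (intro measure_Un_le) auto
    also have "measure lebesgue (?S - V) = 0" using negl negligible_imp_measure0 by blast
    finally have "measure lebesgue T \<le> e" using mV by simp
    then show ?thesis using Tl by (intro exI[of _ T]) (auto simp: T_def)
  qed
  then show ?thesis using negligible_outer_le by blast
qed

lemma density_zero:
  fixes A :: "real set"
  assumes A: "A \<in> sets lebesgue"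
  shows "AE x in lebesgue. x \<notin> A \<longrightarrow> ((\<lambda>h. measure lebesgue (A \<inter> ball x h) / h) \<longlongrightarrow> 0) (at_right 0)"
proof -
  define Bad where "Bad = (\<lambda>(n::nat) (m::nat). {x. x \<notin> A \<and> \<bar>x\<bar> < real m \<and>
     (\<forall>d>0. \<exists>h. 0<h \<and> h<d \<and> (1/Suc n) * (2*h) \<le> measure lebesgue (A \<inter> ball x h))})"
  have nB: "negligible (\<Union>n. \<Union>m. Bad n m)"
    unfolding Bad_def
    by (intro negligible_Union_nat allI density_bad_negligible A) auto
  have sub: "{x. \<not> (x \<notin> A \<longrightarrow> ((\<lambda>h. measure lebesgue (A \<inter> ball x h) / h) \<longlongrightarrow> 0) (at_right 0))}
      \<subseteq> (\<Union>n. \<Union>m. Bad n m)"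
  proof
    fix x assume "x \<in> {x. \<not> (x \<notin> A \<longrightarrow> ((\<lambda>h. measure lebesgue (A \<inter> ball x h) / h) \<longlongrightarrow> 0) (at_right 0))}"
    then have xA: "x \<notin> A" and nt: "\<not> ((\<lambda>h. measure lebesgue (A \<inter> ball x h) / h) \<longlongrightarrow> 0) (at_right 0)"
      by auto
    from nt obtain e where e: "e > 0" and
      ev: "\<not> (\<exists>b>0. \<forall>y>0. y < b \<longrightarrow> dist (measure lebesgue (A \<inter> ball x y) / y) 0 < e)"
      unfolding tendsto_iff eventually_at_right_field by auto
    obtain n :: nat where n: "1 / Suc n < e/2"
      using e by (metis half_gt_zero_iff nat_approx_posE)
    obtain m :: nat where m: "\<bar>x\<bar> < real m" using reals_Archimedean2 by blast
    have "x \<in> Bad n m"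
      unfolding Bad_def
    proof (clarsimp simp: xA m)
      fix d :: real assume d: "d > 0"
      then obtain h where h: "h > 0" "h < d" "\<not> dist (measure lebesgue (A \<inter> ball x h) / h) 0 < e"
        using ev by auto
      have "e * h \<le> measure lebesgue (A \<inter> ball x h)"
        using h by (simp add: field_simps)
      moreover have "(1/(1 + real n)) * (2*h) \<le> e * h"
      proof -
        have "2 < e * (1 + real n)" using n by (simp add: field_simps)
        then have "2*h \<le> e*(1+real n)*h" using h by (intro mult_right_mono) auto
        then show ?thesis by (simp add: field_simps)
      qed
      ultimately show "\<exists>h>0. h < d \<and> 2 * h / (1 + real n) \<le> measure lebesgue (A \<inter> ball x h)"
        using h by (intro exI[of _ h]) auto
    qed
    then show "x \<in> (\<Union>n. \<Union>m. Bad n m)" by blast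
  qed
  show ?thesis
    using nB sub unfolding negligible_iff_null_sets eventually_ae_filter by auto
qed

lemma incr_bound:
  fixes F :: "real \<Rightarrow> real"
  assumes G: "G \<in> sets lebesgue" and y: "y \<in> ball x \<rho>" "y \<noteq> x" and x: "x \<in> ball x \<rho>"
    and F: "\<And>a b. a \<le> b \<Longrightarrow> a \<in> ball x \<rho> \<Longrightarrow> b \<in> ball x \<rho> \<Longrightarrow> F b - F a = measure lebesgue (G \<inter> {a<..<b})"
  shows "\<bar>(F y - F x)/(y - x) - indicator G x\<bar> \<le>
     measure lebesgue ((if x \<in> G then UNIV - G else G) \<inter> ball x \<bar>y - x\<bar>) / \<bar>y - x\<bar>"
proof -
  define a where "a = min x y"
  define b where "b = max x y"
  define \<delta> where "\<delta> = \<bar>y - x\<bar>"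
  have ab: "a < b" "b - a = \<delta>" using y by (auto simp: a_def b_def \<delta>_def)
  have dpos: "\<delta> > 0" using y by (auto simp: \<delta>_def)
  have q: "(F y - F x)/(y - x) = (F b - F a)/(b - a)"
    using y by (cases "x \<le> y") (auto simp: a_def b_def field_simps)
  have abin: "a \<in> ball x \<rho>" "b \<in> ball x \<rho>" using x y by (auto simp: a_def b_def dist_real_def min_def max_def)
  have Fab: "F b - F a = measure lebesgue (G \<inter> {a<..<b})" using F[OF _ abin] ab by simp
  have sub: "{a<..<b} \<subseteq> ball x \<delta>"
    using y by (auto simp: a_def b_def \<delta>_def ball_def dist_real_def)
  have Gl: "G \<inter> {a<..<b} \<in> lmeasurable"
    by (metis G fmeasurable_Int_fmeasurable inf_commute lmeasurable_interval(2))
  have Gb: "G \<inter> ball x r \<in> lmeasurable" "(UNIV - G) \<inter> ball x r \<in> lmeasurable" for r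
  proof -
    have "ball x r \<inter> G \<in> lmeasurable" "ball x r \<inter> (UNIV - G) \<in> lmeasurable"
      by (rule fmeasurable_Int_fmeasurable[OF lmeasurable_ball]; use G in auto)+
    then show "G \<inter> ball x r \<in> lmeasurable" "(UNIV - G) \<inter> ball x r \<in> lmeasurable"
      by (auto simp: Int_commute)
  qed
  show ?thesis
  proof (cases "x \<in> G")
    case False
    have "measure lebesgue (G \<inter> {a<..<b}) \<le> measure lebesgue (G \<inter> ball x \<delta>)"
      by (rule measure_mono_fmeasurable) (use sub G Gb in auto)
    moreover have "measure lebesgue (G \<inter> {a<..<b}) \<ge> 0" by simp
    ultimately show ?thesis using False dpos
      by (simp add: q Fab ab \<delta>_def[symmetric] divide_right_mono)
  next
    case True
    have "measure lebesgue ({a<..<b} - G) = measure lebesgue {a<..<b} - measure lebesgue (G \<inter> {a<..<b})"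
    proof -
      have "{a<..<b} - G = {a<..<b} - (G \<inter> {a<..<b})" by auto
      moreover have "measure lebesgue ({a<..<b} - (G \<inter> {a<..<b})) = measure lebesgue {a<..<b} - measure lebesgue (G \<inter> {a<..<b})"
        by (rule measure_Diff) (use Gl ab in auto)
      ultimately show ?thesis by simp
    qed
    also have "measure lebesgue {a<..<b} = \<delta>" using ab by simp
    finally have eq: "\<delta> - measure lebesgue (G \<inter> {a<..<b}) = measure lebesgue ({a<..<b} - G)" by simp
    have le1: "measure lebesgue (G \<inter> {a<..<b}) \<le> \<delta>"
      using eq by (metis diff_ge_0_iff_ge measure_nonneg)
    have "measure lebesgue ({a<..<b} - G) \<le> measure lebesgue ((UNIV - G) \<inter> ball x \<delta>)"
      by (rule measure_mono_fmeasurable) (use sub G Gb in auto)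
    then have M: "(\<delta> - measure lebesgue (G \<inter> {a<..<b})) / \<delta> \<le> measure lebesgue ((UNIV - G) \<inter> ball x \<delta>) / \<delta>"
      using dpos eq by (simp add: divide_right_mono)
    have "measure lebesgue (G \<inter> {a<..<b}) / \<delta> - 1 = - ((\<delta> - measure lebesgue (G \<inter> {a<..<b})) / \<delta>)"
      using dpos by (simp add: field_simps)
    moreover have "(\<delta> - measure lebesgue (G \<inter> {a<..<b})) / \<delta> \<ge> 0" using le1 dpos by simp
    ultimately have "\<bar>measure lebesgue (G \<inter> {a<..<b}) / \<delta> - 1\<bar> = (\<delta> - measure lebesgue (G \<inter> {a<..<b})) / \<delta>"
      by (metis abs_minus_cancel abs_of_nonneg)
    then have "\<bar>measure lebesgue (G \<inter> {a<..<b}) / \<delta> - 1\<bar> \<le> measure lebesgue ((UNIV - G) \<inter> ball x \<delta>) / \<delta>"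
      using M by simp
    then show ?thesis using True by (simp add: q Fab ab \<delta>_def[symmetric])
  qed
qed

lemma deriv_density:
  fixes F :: "real \<Rightarrow> real"
  assumes G: "G \<in> sets lebesgue" and \<rho>: "\<rho> > 0"
    and F: "\<And>a b. a \<le> b \<Longrightarrow> a \<in> ball x \<rho> \<Longrightarrow> b \<in> ball x \<rho> \<Longrightarrow> F b - F a = measure lebesgue (G \<inter> {a<..<b})"
    and d0: "x \<notin> G \<Longrightarrow> ((\<lambda>h. measure lebesgue (G \<inter> ball x h)/h) \<longlongrightarrow> 0) (at_right 0)"
    and d1: "x \<in> G \<Longrightarrow> ((\<lambda>h. measure lebesgue ((UNIV - G) \<inter> ball x h)/h) \<longlongrightarrow> 0) (at_right 0)"
  shows "(F has_real_derivative indicator G x) (at x)"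
proof -
  define H where "H = (if x \<in> G then UNIV - G else G)"
  have dens: "((\<lambda>h. measure lebesgue (H \<inter> ball x h)/h) \<longlongrightarrow> 0) (at_right 0)"
    using d0 d1 by (cases "x \<in> G") (auto simp: H_def)
  show ?thesis
    unfolding has_field_derivative_iff tendsto_iff eventually_at
  proof (intro allI impI)
    fix e :: real assume e: "e > 0"
    then obtain b where b: "b > 0" "\<forall>h>0. h < b \<longrightarrow> dist (measure lebesgue (H \<inter> ball x h)/h) 0 < e"
      using dens unfolding tendsto_iff eventually_at_right_field by blast
    show "\<exists>d>0. \<forall>y\<in>UNIV. y \<noteq> x \<and> dist y x < d \<longrightarrow> dist ((F y - F x) / (y - x)) (indicator G x) < e"
    proof (intro exI[of _ "min b \<rho>"] conjI ballI impI)
      fix y assume y: "y \<noteq> x \<and> dist y x < min b \<rho>"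
      have yb: "y \<in> ball x \<rho>" using y by (simp add: dist_commute)
      have "\<bar>(F y - F x)/(y - x) - indicator G x\<bar> \<le> measure lebesgue (H \<inter> ball x \<bar>y - x\<bar>) / \<bar>y - x\<bar>"
        unfolding H_def by (rule incr_bound[OF G yb _ _ F]) (use y \<rho> in auto)
      also have "\<dots> < e" using b(2)[rule_format, of "\<bar>y - x\<bar>"] y by (simp add: dist_real_def)
      finally show "dist ((F y - F x) / (y - x)) (indicator G x) < e" by (simp add: dist_real_def)
    qed (use b \<rho> in auto)
  qed
qed

lemma AE_deriv_indicator:
  fixes G :: "real set"
  assumes G: "G \<in> sets lebesgue"
  shows "AE x in lebesgue. \<forall>F \<rho>. \<rho> > 0 \<longrightarrow>
     (\<forall>a b. a \<le> b \<longrightarrow> a \<in> ball x \<rho> \<longrightarrow> b \<in> ball x \<rho> \<longrightarrow> F b - F a = measure lebesgue (G \<inter> {a<..<b}))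
     \<longrightarrow> (F has_real_derivative indicator G x) (at x)"
proof -
  have G': "UNIV - G \<in> sets lebesgue" using G by auto
  show ?thesis
    using density_zero[OF G] density_zero[OF G']
    by eventually_elim (auto intro: deriv_density[OF G])
qed

lemma isCont_ereal: "isCont ereal x"
  unfolding isCont_def by (intro tendsto_ereal tendsto_ident_at)

lemma contUNIV_ereal: "continuous_on UNIV ereal"
  by (simp add: continuous_at_imp_continuous_on isCont_ereal)

lemma intI_iff: "x \<in> intI E \<longleftrightarrow> (lend E < ereal x \<and> ereal x < rend E) \<or> (x \<in> E \<and> (ereal x = lend E \<or> ereal x = rend E))"
  by (auto simp: intI_def)

lemma E_bounds: "x \<in> E \<Longrightarrow> lend E \<le> ereal x \<and> ereal x \<le> rend E"
  by (auto simp: lend_def rend_def intro: Inf_lower Sup_upper)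

lemma E_sub_I: "E \<subseteq> intI E"
proof
  fix x assume x: "x \<in> E"
  then have "lend E \<le> ereal x" "ereal x \<le> rend E" using E_bounds by auto
  then show "x \<in> intI E" using x unfolding intI_iff by (auto simp: le_less)
qed

lemma intI_bounds: "x \<in> intI E \<Longrightarrow> lend E \<le> ereal x \<and> ereal x \<le> rend E"
  unfolding intI_iff using E_bounds by (auto simp: less_imp_le)

lemma intI_convex:
  assumes "x \<in> intI E" "y \<in> intI E" "x \<le> z" "z \<le> y"
  shows "z \<in> intI E"
proof (cases "z = x \<or> z = y")
  case True then show ?thesis using assms by auto
next
  case False
  then have "x < z" "z < y" using assms by auto
  then have xz: "ereal x < ereal z" and zy: "ereal z < ereal y" by simp_all
  have "lend E \<le> ereal x" "ereal y \<le> rend E"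
    using intI_bounds[OF assms(1)] intI_bounds[OF assms(2)] by simp_all
  then have "lend E < ereal z" "ereal z < rend E"
    using xz zy by (meson order.strict_trans1, meson order.strict_trans2)
  then show ?thesis by (simp add: intI_iff)
qed

lemma Icc_sub_I: "x \<in> intI E \<Longrightarrow> y \<in> intI E \<Longrightarrow> {x..y} \<subseteq> intI E"
  using intI_convex by (meson atLeastAtMost_iff subsetI)

lemma Ioo_sub_I: "x \<in> intI E \<Longrightarrow> y \<in> intI E \<Longrightarrow> {x<..<y} \<subseteq> intI E"
  using intI_convex by (meson greaterThanLessThan_iff less_imp_le subsetI)

lemma open_inner: "open {x. lend E < ereal x \<and> ereal x < rend E}"
proof -
  have "{x. lend E < ereal x \<and> ereal x < rend E} = ereal -` {lend E<..<rend E}" by auto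
  then show ?thesis using open_vimage[OF _ contUNIV_ereal] by simp
qed

lemma closedE':
  assumes "classK E"
  shows "closed (ereal -` (ereal ` E \<union> {lend E, rend E}))"
  using assms unfolding classK_def by (intro closed_vimage[OF _ contUNIV_ereal]) auto

lemma I_minus_E_eq:
  "intI E - E = {x. lend E < ereal x \<and> ereal x < rend E} - ereal -` (ereal ` E \<union> {lend E, rend E})"
  by (auto simp: intI_iff)

lemma open_I_minus_E:
  assumes "classK E" shows "open (intI E - E)"
  unfolding I_minus_E_eq using open_inner closedE'[OF assms] by (intro open_Diff)

lemma ereal_eq_finite: "finite {x. ereal x = c}"
proof -
  have "{x. ereal x = c} \<subseteq> {real_of_ereal c}" by auto
  then show ?thesis using finite_subset by blast
qed

lemma I_boundary_finite: "finite (intI E - {x. lend E < ereal x \<and> ereal x < rend E})"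
proof -
  have "intI E - {x. lend E < ereal x \<and> ereal x < rend E} \<subseteq> {x. ereal x = lend E} \<union> {x. ereal x = rend E}"
    by (auto simp: intI_iff)
  then show ?thesis by (rule finite_subset) (simp add: ereal_eq_finite)
qed

lemma inner_ball:
  assumes "lend E < ereal x" "ereal x < rend E"
  obtains \<rho> where "\<rho> > 0" "ball x \<rho> \<subseteq> intI E"
proof -
  have xin: "x \<in> {x. lend E < ereal x \<and> ereal x < rend E}" using assms by simp
  obtain \<rho> where "\<rho> > 0" "ball x \<rho> \<subseteq> {x. lend E < ereal x \<and> ereal x < rend E}"
    by (rule openE[OF open_inner xin]) blast
  moreover have sub: "{x. lend E < ereal x \<and> ereal x < rend E} \<subseteq> intI E" by (auto simp: intI_iff)
  ultimately have "ball x \<rho> \<subseteq> intI E" by (meson subset_trans)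
  then show ?thesis using that \<open>\<rho> > 0\<close> by blast
qed

lemma gap:
  assumes K: "classK E" and x: "x \<in> intI E - E"
  shows "Sup {y\<in>E. y<x} \<in> E \<and> Inf {y\<in>E. x<y} \<in> E \<and> Sup {y\<in>E. y<x} < x \<and> x < Inf {y\<in>E. x<y}
     \<and> (\<forall>y\<in>E. \<not> (Sup {y\<in>E. y<x} < y \<and> y < Inf {y\<in>E. x<y}))"
proof -
  define E' where "E' = ereal -` (ereal ` E \<union> {lend E, rend E})"
  have cE': "closed E'" using closedE'[OF K] by (simp add: E'_def)
  have xin: "lend E < ereal x" "ereal x < rend E" "x \<notin> E" using x by (auto simp: intI_iff)
  have xE': "x \<notin> E'" using xin by (auto simp: E'_def)
  define L where "L = {y\<in>E. y<x}"
  define R where "R = {y\<in>E. x<y}"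
  have Lne: "L \<noteq> {}"
  proof -
    have "Inf (ereal ` E) < ereal x" using xin by (simp add: lend_def)
    then obtain y where "y \<in> E" "ereal y < ereal x" by (auto simp: Inf_less_iff)
    then show ?thesis by (auto simp: L_def)
  qed
  have Rne: "R \<noteq> {}"
  proof -
    have "ereal x < Sup (ereal ` E)" using xin by (simp add: rend_def)
    then obtain y where "y \<in> E" "ereal x < ereal y" by (auto simp: less_Sup_iff)
    then show ?thesis by (auto simp: R_def)
  qed
  have Lb: "bdd_above L" by (auto simp: L_def bdd_above_def intro!: exI[of _ x])
  have Rb: "bdd_below R" by (auto simp: R_def bdd_below_def intro!: exI[of _ x])
  define a where "a = Sup L"
  define b where "b = Inf R"
  have aE': "a \<in> E'"
  proof -
    have "L \<subseteq> E'" by (auto simp: L_def E'_def)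
    then have "closure L \<subseteq> E'" using cE' by (rule closure_minimal)
    then show ?thesis using closure_contains_Sup[OF Lne Lb] by (auto simp: a_def)
  qed
  have bE': "b \<in> E'"
  proof -
    have "R \<subseteq> E'" by (auto simp: R_def E'_def)
    then have "closure R \<subseteq> E'" using cE' by (rule closure_minimal)
    then show ?thesis using closure_contains_Inf[OF Rne Rb] by (auto simp: b_def)
  qed
  have ax: "a \<le> x" unfolding a_def using Lne by (intro cSup_least) (auto simp: L_def)
  have xb: "x \<le> b" unfolding b_def using Rne by (intro cInf_greatest) (auto simp: R_def)
  have ax': "a < x" using ax aE' xE' by (cases "a = x") auto
  have xb': "x < b" using xb bE' xE' by (cases "b = x") auto
  obtain y0 where y0: "y0 \<in> L" using Lne by blast
  have y0a: "y0 \<le> a" using y0 Lb by (auto simp: a_def intro: cSup_upper)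
  obtain y1 where y1: "y1 \<in> R" using Rne by blast
  have y1b: "b \<le> y1" using y1 Rb by (auto simp: b_def intro: cInf_lower)
  have aE: "a \<in> E"
  proof -
    have "a \<in> E \<or> ereal a = lend E \<or> ereal a = rend E" using aE' by (auto simp: E'_def)
    moreover have "ereal a \<noteq> rend E"
    proof
      assume "ereal a = rend E"
      then have "ereal x < ereal a" using xin(2) by simp
      then show False using ax' by simp
    qed
    moreover have "ereal a = lend E \<Longrightarrow> a \<in> E"
    proof -
      assume "ereal a = lend E"
      moreover have "lend E \<le> ereal y0" using y0 E_bounds by (auto simp: L_def)
      ultimately have "a \<le> y0" by (metis ereal_less_eq(3))
      then have "a = y0" using y0a by simp
      then show "a \<in> E" using y0 by (simp add: L_def)
    qed
    ultimately show ?thesis by blast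
  qed
  have bE: "b \<in> E"
  proof -
    have "b \<in> E \<or> ereal b = lend E \<or> ereal b = rend E" using bE' by (auto simp: E'_def)
    moreover have "ereal b \<noteq> lend E"
    proof
      assume "ereal b = lend E"
      then have "ereal b < ereal x" using xin(1) by simp
      then show False using xb' by simp
    qed
    moreover have "ereal b = rend E \<Longrightarrow> b \<in> E"
    proof -
      assume "ereal b = rend E"
      moreover have "ereal y1 \<le> rend E" using y1 E_bounds by (auto simp: R_def)
      ultimately have "y1 \<le> b" by (metis ereal_less_eq(3))
      then have "b = y1" using y1b by simp
      then show "b \<in> E" using y1 by (simp add: R_def)
    qed
    ultimately show ?thesis by blast
  qed
  have none: "\<forall>y\<in>E. \<not> (a < y \<and> y < b)"
  proof (intro ballI notI)
    fix y assume y: "y \<in> E" "a < y \<and> y < b"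
    show False
    proof (cases "y < x")
      case True
      then have "y \<in> L" using y by (simp add: L_def)
      then have "y \<le> a" using Lb unfolding a_def by (rule cSup_upper)
      then show False using y by simp
    next
      case False
      then have "x < y" using y xin by (cases "x = y") auto
      then have "y \<in> R" using y by (simp add: R_def)
      then have "b \<le> y" using Rb unfolding b_def by (rule cInf_lower)
      then show False using y by simp
    qed
  qed
  show ?thesis using aE bE ax' xb' none by (simp add: a_def b_def L_def R_def)
qed

lemma ac_family:
  fixes f :: "real \<Rightarrow> real" and lo hi :: "'a \<Rightarrow> real"
  assumes ac: "abs_cont_on S f" and e: "e > 0"
  obtains \<delta> where "\<delta> > 0"
    "\<And>F. finite F \<Longrightarrow> (\<forall>K\<in>F. lo K \<le> hi K \<and> {lo K..hi K} \<subseteq> S) \<Longrightarrow>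
       (\<forall>K\<in>F. \<forall>K'\<in>F. K \<noteq> K' \<longrightarrow> hi K \<le> lo K' \<or> hi K' \<le> lo K) \<Longrightarrow>
       (\<Sum>K\<in>F. hi K - lo K) < \<delta> \<Longrightarrow> (\<Sum>K\<in>F. \<bar>f (hi K) - f (lo K)\<bar>) < e"
proof -
  obtain \<delta> where \<delta>: "\<delta>>0" and H: "\<forall>(n::nat) (a::nat \<Rightarrow> real) (b::nat \<Rightarrow> real).
        (\<forall>i<n. a i \<le> b i \<and> {a i..b i} \<subseteq> S) \<and>
        (\<forall>i<n. \<forall>j<n. i \<noteq> j \<longrightarrow> b i \<le> a j \<or> b j \<le> a i) \<and>
        (\<Sum>i<n. b i - a i) < \<delta>
        \<longrightarrow> (\<Sum>i<n. \<bar>f (b i) - f (a i)\<bar>) < e"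
    using ac e unfolding abs_cont_on_def by blast
  show ?thesis
  proof (rule that[OF \<delta>])
    fix F assume F: "finite F" and h1: "\<forall>K\<in>F. lo K \<le> hi K \<and> {lo K..hi K} \<subseteq> S"
      and h2: "\<forall>K\<in>F. \<forall>K'\<in>F. K \<noteq> K' \<longrightarrow> hi K \<le> lo K' \<or> hi K' \<le> lo K"
      and h3: "(\<Sum>K\<in>F. hi K - lo K) < \<delta>"
    obtain h where h: "bij_betw h {0..<card F} F" using ex_bij_betw_nat_finite[OF F] by blast
    have eq1: "(\<Sum>i<card F. hi (h i) - lo (h i)) = (\<Sum>K\<in>F. hi K - lo K)"
      using sum.reindex_bij_betw[OF h, of "\<lambda>K. hi K - lo K"] by (simp add: atLeast0LessThan)
    have eq2: "(\<Sum>i<card F. \<bar>f (hi (h i)) - f (lo (h i))\<bar>) = (\<Sum>K\<in>F. \<bar>f (hi K) - f (lo K)\<bar>)"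
      using sum.reindex_bij_betw[OF h, of "\<lambda>K. \<bar>f (hi K) - f (lo K)\<bar>"] by (simp add: atLeast0LessThan)
    have hin: "h i \<in> F" if "i < card F" for i using h that by (auto simp: bij_betw_def)
    have hinj: "h i \<noteq> h j" if "i < card F" "j < card F" "i \<noteq> j" for i j
      using h that by (auto simp: bij_betw_def inj_on_def)
    have c1: "\<forall>i<card F. lo (h i) \<le> hi (h i) \<and> {lo (h i)..hi (h i)} \<subseteq> S" using h1 hin by blast
    have c2: "\<forall>i<card F. \<forall>j<card F. i \<noteq> j \<longrightarrow> hi (h i) \<le> lo (h j) \<or> hi (h j) \<le> lo (h i)"
      using h2 hin hinj by blast
    have c3: "(\<Sum>i<card F. hi (h i) - lo (h i)) < \<delta>" using eq1 h3 by simp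
    have "(\<Sum>i<card F. \<bar>f (hi (h i)) - f (lo (h i))\<bar>) < e"
      using H[rule_format, of "card F" "\<lambda>i. lo (h i)" "\<lambda>i. hi (h i)", OF conjI[OF c1 conjI[OF c2 c3]]] .
    then show "(\<Sum>K\<in>F. \<bar>f (hi K) - f (lo K)\<bar>) < e" using eq2 by simp
  qed
qed

lemma interval_disj_real:
  fixes c d c' d' :: real
  assumes "c < d" "c' < d'" "{c<..<d} \<inter> {c'<..<d'} = {}"
  shows "d \<le> c' \<or> d' \<le> c"
proof (rule ccontr)
  assume "\<not> (d \<le> c' \<or> d' \<le> c)"
  then have "max c c' < min d d'" using assms(1,2) by (auto simp: max_def min_def)
  then have "(max c c' + min d d')/2 \<in> {c<..<d} \<inter> {c'<..<d'}"
    by (simp add: field_simps max_def min_def split: if_splits)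
  then show False using assms(3) by blast
qed

lemma lusinN:
  fixes f :: "real \<Rightarrow> real"
  assumes ac: "abs_cont_on {a..b} f" and mono: "mono_on {a..b} f"
    and Z: "negligible Z" "Z \<subseteq> {a..b}"
  shows "negligible (f ` Z)"
proof (cases "a < b")
  case False
  then have "Z \<subseteq> {a}" using Z(2) by auto
  then have "f ` Z \<subseteq> {f a}" by auto
  then show ?thesis using negligible_subset negligible_sing by metis
next
  case ab: True
  have "\<exists>T. f ` Z \<subseteq> T \<and> T \<in> lmeasurable \<and> measure lebesgue T \<le> e" if e: "e > 0" for e
  proof -
    obtain \<delta> where \<delta>: "\<delta> > 0" and acF:
      "\<And>F. finite F \<Longrightarrow> (\<forall>K\<in>F. Inf K \<le> Sup K \<and> {Inf K..Sup K} \<subseteq> {a..b}) \<Longrightarrow>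
       (\<forall>K\<in>F. \<forall>K'\<in>F. K \<noteq> K' \<longrightarrow> Sup K \<le> Inf K' \<or> Sup K' \<le> Inf K) \<Longrightarrow>
       (\<Sum>K\<in>F. Sup K - Inf K) < \<delta> \<Longrightarrow> (\<Sum>K\<in>F. \<bar>f (Sup K) - f (Inf K)\<bar>) < e"
      by (rule ac_family[OF ac e, where lo=Inf and hi=Sup]) blast
    have Zl: "Z \<in> lmeasurable" using Z(1) negligible_imp_measurable by blast
    have Z0: "measure lebesgue Z = 0" using Z(1) negligible_imp_measure0 by blast
    have Zc: "Z \<subseteq> cbox a b" using Z(2) by simp
    have d2: "\<delta>/2 > 0" using \<delta> by simp
    obtain D where D: "countable D"
        "\<And>K. K \<in> D \<Longrightarrow> K \<subseteq> cbox a b \<and> K \<noteq> {} \<and> (\<exists>c d. K = cbox c d)"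
        "pairwise (\<lambda>A B. interior A \<inter> interior B = {}) D"
        "\<And>u v. cbox u v \<in> D \<Longrightarrow> \<exists>n. \<forall>i \<in> Basis. v \<bullet> i - u \<bullet> i = (b \<bullet> i - a \<bullet> i)/2^n"
        "\<And>K. \<lbrakk>K \<in> D; box a b \<noteq> {}\<rbrakk> \<Longrightarrow> interior K \<noteq> {}"
        "Z \<subseteq> \<Union>D" "\<Union>D \<in> lmeasurable" "measure lebesgue (\<Union>D) \<le> measure lebesgue Z + \<delta>/2"
      by (rule measurable_outer_intervals_bounded[OF Zl Zc d2]) blast
    have Kform: "{Inf K..Sup K} = K \<and> Inf K < Sup K \<and> a \<le> Inf K \<and> Sup K \<le> b" if K: "K \<in> D" for K
    proof -
      obtain c d where cd: "K = cbox c d" using D(2)[OF K] by blast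
      have K': "K = {c..d}" using cd by simp
      have "interior K \<noteq> {}" using D(5)[OF K] ab by auto
      then have cd1: "c < d" using K' by auto
      have ID: "Inf K = c" "Sup K = d" using K' cd1 by auto
      have "{c..d} \<subseteq> {a..b}" using D(2)[OF K] K' by auto
      then have "a \<le> c" "d \<le> b" using cd1 by auto
      then show ?thesis using ID K' cd1 by simp
    qed
    have Kmem: "x \<in> K \<longleftrightarrow> Inf K \<le> x \<and> x \<le> Sup K" if K: "K \<in> D" for K x
    proof -
      have "x \<in> {Inf K..Sup K} \<longleftrightarrow> Inf K \<le> x \<and> x \<le> Sup K" by simp
      then show ?thesis using Kform[OF K] by metis
    qed
    have Klt: "Inf K < Sup K" "a \<le> Inf K" "Sup K \<le> b" if K: "K \<in> D" for K
      using Kform[OF K] by auto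
    have Klm: "K \<in> lmeasurable" if K: "K \<in> D" for K
      using Kform[OF K] by (metis lmeasurable_interval(1))
    have sepK: "Sup K \<le> Inf K' \<or> Sup K' \<le> Inf K" if "K \<in> D" "K' \<in> D" "K \<noteq> K'" for K K'
    proof -
      have "interior K \<inter> interior K' = {}" using D(3) that by (auto simp: pairwise_def)
      then have "{Inf K<..<Sup K} \<inter> {Inf K'<..<Sup K'} = {}"
        using Kform[OF that(1)] Kform[OF that(2)] by (metis interior_atLeastAtMost_real)
      then show ?thesis using interval_disj_real[of "Inf K" "Sup K" "Inf K'" "Sup K'"] Klt that by blast
    qed
    have Dm: "measure lebesgue (\<Union>D) < \<delta>" using D(8) Z0 \<delta> by simp
    define \<Phi> where "\<Phi> K = {f (Inf K)..f (Sup K)}" for K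
    define T where "T = (\<Union>K\<in>D. \<Phi> K)"
    have fZT: "f ` Z \<subseteq> T"
    proof
      fix y assume "y \<in> f ` Z"
      then obtain z where z: "z \<in> Z" "y = f z" by blast
      then obtain K where K: "K \<in> D" "z \<in> K" using D(6) by blast
      have "Inf K \<le> z" "z \<le> Sup K" "Inf K \<in> {a..b}" "Sup K \<in> {a..b}" "z \<in> {a..b}"
        using Kmem[OF K(1)] Klt[OF K(1)] K(2) by auto
      then have "f (Inf K) \<le> f z \<and> f z \<le> f (Sup K)"
        using mono by (auto intro: mono_onD)
      then show "y \<in> T" using K z by (auto simp: T_def \<Phi>_def)
    qed
    have finsum: "emeasure lebesgue (\<Union>K\<in>F. \<Phi> K) \<le> ennreal e" if F: "finite F" "F \<subseteq> D" for F
    proof -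
      have "emeasure lebesgue (\<Union>K\<in>F. \<Phi> K) \<le> (\<Sum>K\<in>F. emeasure lebesgue (\<Phi> K))"
        by (rule emeasure_subadditive_finite) (use F in \<open>auto simp: \<Phi>_def\<close>)
      also have "\<dots> = (\<Sum>K\<in>F. ennreal \<bar>f (Sup K) - f (Inf K)\<bar>)"
      proof (rule sum.cong[OF refl])
        fix K assume "K \<in> F"
        then have K: "K \<in> D" using F by auto
        have "f (Inf K) \<le> f (Sup K)" using Klt[OF K] mono by (auto intro: mono_onD)
        then show "emeasure lebesgue (\<Phi> K) = ennreal \<bar>f (Sup K) - f (Inf K)\<bar>"
          by (simp add: \<Phi>_def)
      qed
      also have "\<dots> = ennreal (\<Sum>K\<in>F. \<bar>f (Sup K) - f (Inf K)\<bar>)"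
        by (rule sum_ennreal) auto
      also have "\<dots> \<le> ennreal e"
      proof (rule ennreal_leI, rule less_imp_le, rule acF[OF F(1)])
        show "\<forall>K\<in>F. Inf K \<le> Sup K \<and> {Inf K..Sup K} \<subseteq> {a..b}" using Klt F by fastforce
        show "\<forall>K\<in>F. \<forall>K'\<in>F. K \<noteq> K' \<longrightarrow> Sup K \<le> Inf K' \<or> Sup K' \<le> Inf K" using sepK F by blast
        have "(\<Sum>K\<in>F. Sup K - Inf K) = (\<Sum>K\<in>F. measure lebesgue K)"
        proof (rule sum.cong[OF refl])
          fix K assume "K \<in> F"
          then have K: "K \<in> D" using F by auto
          have "measure lebesgue {Inf K..Sup K} = Sup K - Inf K" using Klt[OF K] by simp
          then show "Sup K - Inf K = measure lebesgue K" using Kform[OF K] by metis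
        qed
        also have "\<dots> = measure lebesgue (\<Union>F)"
        proof (rule measure_negligible_finite_Union[symmetric, OF F(1)])
          show "\<And>S. S \<in> F \<Longrightarrow> S \<in> lmeasurable" using Klm F by blast
          show "pairwise (\<lambda>S T. negligible (S \<inter> T)) F"
            unfolding pairwise_def
          proof (intro ballI impI)
            fix K K' assume KK: "K \<in> F" "K' \<in> F" "K \<noteq> K'"
            then have KD: "K \<in> D" "K' \<in> D" using F by auto
            have "K \<inter> K' \<subseteq> {Sup K, Sup K'}"
              using sepK[OF KD KK(3)] Kmem[OF KD(1)] Kmem[OF KD(2)] by force
            then show "negligible (K \<inter> K')" using negligible_subset negligible_finite by (metis finite.emptyI finite_insert)
          qed
        qed
        also have "\<dots> \<le> measure lebesgue (\<Union>D)"
        proof -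
          have "\<Union>F \<in> sets lebesgue" using F Klm by (intro sets.finite_Union) auto
          then show ?thesis using F D(7) by (intro measure_mono_fmeasurable) auto
        qed
        finally show "(\<Sum>K\<in>F. Sup K - Inf K) < \<delta>" using Dm by simp
      qed
      finally show ?thesis .
    qed
    have Tle: "emeasure lebesgue T \<le> ennreal e"
    proof (cases "D = {}")
      case True then show ?thesis by (simp add: T_def)
    next
      case False
      define g where "g = from_nat_into D"
      have rg: "range g = D" using False D(1) by (simp add: g_def)
      define P where "P n = (\<Union>i<n. \<Phi> (g i))" for n
      have "T = (\<Union>n. P n)"
        unfolding T_def P_def by (auto simp flip: rg)
      moreover have "(SUP n. emeasure lebesgue (P n)) = emeasure lebesgue (\<Union>n. P n)"
      proof (rule SUP_emeasure_incseq)
        show "incseq P" unfolding incseq_def P_def by (intro allI impI UN_mono) auto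
      qed (auto simp: P_def \<Phi>_def intro!: sets.finite_UN)
      moreover have "emeasure lebesgue (P n) \<le> ennreal e" for n
      proof -
        have "P n = (\<Union>K\<in>g ` {..<n}. \<Phi> K)" by (auto simp: P_def)
        then show ?thesis using finsum[of "g ` {..<n}"] rg by auto
      qed
      ultimately show ?thesis by (metis SUP_least)
    qed
    have Tsets: "T \<in> sets lebesgue"
      unfolding T_def by (rule sets.countable_UN'') (use D(1) in \<open>auto simp: \<Phi>_def\<close>)
    have Tl: "T \<in> lmeasurable"
    proof -
      have "emeasure lebesgue T < top" using Tle by (metis ennreal_less_top le_less_trans)
      then show ?thesis using Tsets by (intro fmeasurableI) auto
    qed
    have "ennreal (measure lebesgue T) \<le> ennreal e" using Tle by (simp add: emeasure_eq_measure2[OF Tl])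
    then have "measure lebesgue T \<le> e" using e by (simp add: ennreal_le_iff)
    then show ?thesis using fZT Tl by blast
  qed
  then show ?thesis using negligible_outer_le by blast
qed

lemma ac_continuous:
  fixes f :: "real \<Rightarrow> real"
  assumes ac: "abs_cont_on {a..b} f"
  shows "continuous_on {a..b} f"
  unfolding continuous_on_iff
proof (intro ballI allI impI)
  fix x e :: real assume x: "x \<in> {a..b}" and e: "e > 0"
  obtain \<delta> where \<delta>: "\<delta>>0" and H: "\<forall>(n::nat) (a0::nat \<Rightarrow> real) (b0::nat \<Rightarrow> real).
        (\<forall>i<n. a0 i \<le> b0 i \<and> {a0 i..b0 i} \<subseteq> {a..b}) \<and>
        (\<forall>i<n. \<forall>j<n. i \<noteq> j \<longrightarrow> b0 i \<le> a0 j \<or> b0 j \<le> a0 i) \<and>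
        (\<Sum>i<n. b0 i - a0 i) < \<delta>
        \<longrightarrow> (\<Sum>i<n. \<bar>f (b0 i) - f (a0 i)\<bar>) < e"
    using ac e unfolding abs_cont_on_def by blast
  show "\<exists>d>0. \<forall>x'\<in>{a..b}. dist x' x < d \<longrightarrow> dist (f x') (f x) < e"
  proof (intro exI[of _ \<delta>] conjI ballI impI)
    fix y assume y: "y \<in> {a..b}" and d: "dist y x < \<delta>"
    have c1: "\<forall>i<1. min x y \<le> max x y \<and> {min x y..max x y} \<subseteq> {a..b}" using x y by auto
    have c2: "\<forall>i<(1::nat). \<forall>j<1. i \<noteq> j \<longrightarrow> max x y \<le> min x y \<or> max x y \<le> min x y" by auto
    have c3: "(\<Sum>i<(1::nat). max x y - min x y) < \<delta>" using d by (cases "x \<le> y") (auto simp: dist_real_def max_def min_def)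
    have "(\<Sum>i<(1::nat). \<bar>f (max x y) - f (min x y)\<bar>) < e"
      using H[rule_format, of 1 "\<lambda>_. min x y" "\<lambda>_. max x y", OF conjI[OF c1 conjI[OF c2 c3]]] .
    then show "dist (f y) (f x) < e" by (cases "x \<le> y") (auto simp: dist_real_def max_def min_def abs_minus_commute)
  qed (use \<delta> in auto)
qed

lemma mono_image_interval:
  fixes f :: "real \<Rightarrow> real"
  assumes "continuous_on {x..y} f" "mono_on {x..y} f" "x \<le> y"
  shows "f ` {x..y} = {f x..f y}"
proof
  show "f ` {x..y} \<subseteq> {f x..f y}" using assms(3) by (auto intro!: mono_onD[OF assms(2)])
  show "{f x..f y} \<subseteq> f ` {x..y}"
  proof
    fix v assume "v \<in> {f x..f y}"
    then obtain z where "x \<le> z" "z \<le> y" "f z = v" using IVT'[of f x v y] assms by auto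
    then show "v \<in> f ` {x..y}" by auto
  qed
qed

lemma ftc_piece:
  fixes sb :: "real \<Rightarrow> real"
  assumes xy: "x \<le> y" "{x..y} \<subseteq> I"
    and ac: "abs_cont_on {x..y} sb" and sm: "strict_mono_on I sb"
    and N: "negligible N"
    and der: "\<And>z. z \<in> I - N \<Longrightarrow> (sb has_real_derivative 0) (at z within I) \<or> (sb has_real_derivative 1) (at z within I)"
  defines "D1 \<equiv> {z \<in> I. (sb has_real_derivative 1) (at z within I)}"
  shows "D1 \<inter> {x..y} \<in> lmeasurable \<and> sb y - sb x = measure lebesgue (D1 \<inter> {x..y})"
proof -
  define J where "J = {x..y}"
  define S where "S = J - N"
  have Nm: "N \<in> sets lebesgue" using negligible_imp_measurable[OF N] by blast
  have Nnull: "N \<in> null_sets lebesgue" using N negligible_iff_null_sets by blast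
  have Sm: "S \<in> sets lebesgue" unfolding S_def J_def using Nm by auto
  have SI: "S \<subseteq> I" using xy by (auto simp: S_def J_def)
  define g' where "g' z = (if z \<in> D1 then 1 else (0::real))" for z
  have dS: "(sb has_field_derivative g' z) (at z within S)" if z: "z \<in> S" for z
  proof -
    have zI: "z \<in> I - N" using z SI by (auto simp: S_def)
    show ?thesis
    proof (cases "z \<in> D1")
      case True
      then have "(sb has_real_derivative 1) (at z within I)" by (simp add: D1_def)
      then show ?thesis using True SI by (auto simp: g'_def intro: has_field_derivative_subset)
    next
      case False
      then have "(sb has_real_derivative 0) (at z within I)" using der[OF zI] zI by (auto simp: D1_def)
      then show ?thesis using False SI by (auto simp: g'_def intro: has_field_derivative_subset)
    qed
  qed
  have injS: "inj_on sb S" using strict_mono_on_imp_inj_on[OF sm] SI by (rule inj_on_subset)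
  have diffS: "sb differentiable_on S"
    using dS by (auto simp: differentiable_on_def has_field_derivative_def intro: differentiableI)
  have imSm: "sb ` S \<in> sets lebesgue"
    by (rule differentiable_image_in_sets_lebesgue[OF Sm _ diffS]) simp
  have monoJ: "mono_on J sb" using strict_mono_on_imp_mono_on[OF sm] xy
    by (auto simp: J_def intro: mono_on_subset)
  have contJ: "continuous_on J sb" using ac_continuous[OF ac] by (simp add: J_def)
  have imJ: "sb ` J = {sb x..sb y}" unfolding J_def
    by (rule mono_image_interval) (use contJ monoJ xy in \<open>auto simp: J_def\<close>)
  have imSl: "sb ` S \<in> lmeasurable"
  proof (rule bounded_set_imp_lmeasurable[OF _ imSm])
    have "sb ` S \<subseteq> {sb x..sb y}" using imJ by (auto simp: S_def)
    then show "bounded (sb ` S)" using bounded_subset bounded_closed_interval by metis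
  qed
  have CV: "(\<lambda>z. \<bar>g' z\<bar> * 1) absolutely_integrable_on S \<and>
           integral S (\<lambda>z. \<bar>g' z\<bar> * 1) = measure lebesgue (sb ` S)"
  proof (subst has_absolute_integral_change_of_variables_1'[OF Sm dS injS, of "\<lambda>_. 1"])
    show "(\<lambda>_. 1::real) absolutely_integrable_on sb ` S \<and> integral (sb ` S) (\<lambda>_. 1) = measure lebesgue (sb ` S)"
      using imSl by (simp add: absolutely_integrable_on_iff_nonneg lmeasurable_iff_integrable_on lmeasure_integral)
  qed auto
  have geq: "(\<lambda>z. \<bar>g' z\<bar> * 1) = (\<lambda>z. if z \<in> D1 then 1 else 0)" by (auto simp: g'_def)
  have int1: "(\<lambda>z. if z \<in> D1 then (\<lambda>_. 1::real) z else 0) integrable_on S"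
    using CV geq by (auto dest: set_lebesgue_integral_eq_integral absolutely_integrable_on_def[THEN iffD1] simp: absolutely_integrable_on_def)
  then have DSl: "D1 \<inter> S \<in> lmeasurable" by (simp add: integrable_restrict_Int lmeasurable_iff_integrable_on)
  have "measure lebesgue (D1 \<inter> S) = integral (D1 \<inter> S) (\<lambda>_. 1)" using DSl by (rule lmeasure_integral)
  also have "\<dots> = integral S (\<lambda>z. if z \<in> D1 then 1 else 0)" by (simp add: integral_restrict_Int)
  also have "\<dots> = measure lebesgue (sb ` S)" using CV geq by simp
  finally have m1: "measure lebesgue (D1 \<inter> S) = measure lebesgue (sb ` S)" .
  have DJ: "D1 \<inter> J = (D1 \<inter> S) \<union> (D1 \<inter> (J \<inter> N))" by (auto simp: S_def)
  have n1': "negligible (D1 \<inter> (J \<inter> N))" by (rule negligible_subset[OF N]) auto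
  then have n1: "D1 \<inter> (J \<inter> N) \<in> null_sets lebesgue" using negligible_iff_null_sets by blast
  have DJl: "D1 \<inter> J \<in> lmeasurable"
    unfolding DJ by (intro fmeasurable.Un DSl negligible_imp_measurable n1')
  have m2: "measure lebesgue (D1 \<inter> J) = measure lebesgue (D1 \<inter> S)"
    unfolding DJ using DSl n1 by (intro measure_Un_null_set) auto
  have SJ: "sb ` J = sb ` S \<union> sb ` (J \<inter> N)" by (auto simp: S_def)
  have n2: "sb ` (J \<inter> N) \<in> null_sets lebesgue"
  proof -
    have "negligible (sb ` (J \<inter> N))"
      by (rule lusinN[OF ac]) (use monoJ negligible_subset[OF N] in \<open>auto simp: J_def\<close>)
    then show ?thesis using negligible_iff_null_sets by blast
  qed
  have m3: "measure lebesgue (sb ` J) = measure lebesgue (sb ` S)"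
    unfolding SJ using imSl n2 by (intro measure_Un_null_set) auto
  have sxy: "sb x \<le> sb y" using monoJ xy by (auto simp: J_def intro: mono_onD)
  have "measure lebesgue (sb ` J) = sb y - sb x" using imJ sxy by simp
  then show ?thesis using DJl m1 m2 m3 by (simp add: J_def)
qed

lemma lint_indicator_measure:
  fixes G A :: "real set"
  assumes "G \<in> sets lebesgue" "A \<in> sets lebesgue"
  shows "(LINT x|lebesgue. indicator A x *\<^sub>R indicator G x) = measure lebesgue (G \<inter> A)"
proof -
  have "(\<lambda>x. indicator A x *\<^sub>R indicator G x) = (indicator (G \<inter> A) :: real \<Rightarrow> real)"
    by (auto simp: indicator_def fun_eq_iff)
  then show ?thesis by (simp add: integral_indicator)
qed

lemma LINT_ind:
  fixes G :: "real set"
  assumes G: "G \<in> sets lebesgue"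
  shows "(LINT y=ereal a..ereal b|lebesgue. indicator G y) =
     (if a \<le> b then measure lebesgue (G \<inter> {a<..<b}) else - measure lebesgue (G \<inter> {b<..<a}))"
  unfolding interval_lebesgue_integral_def set_lebesgue_integral_def einterval_eq_Icc
  using lint_indicator_measure[OF G] by simp

lemma Gint_lmeas:
  fixes G :: "real set"
  assumes G: "G \<in> sets lebesgue"
  shows "G \<inter> {a<..<b} \<in> lmeasurable" "G \<inter> {a..b} \<in> lmeasurable"
proof -
  have "{a<..<b} \<inter> G \<in> lmeasurable" "{a..b} \<inter> G \<in> lmeasurable"
    by (rule fmeasurable_Int_fmeasurable; use G in auto)+
  then show "G \<inter> {a<..<b} \<in> lmeasurable" "G \<inter> {a..b} \<in> lmeasurable" by (simp_all add: Int_commute)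
qed

lemma Phi_add:
  fixes G :: "real set"
  assumes G: "G \<in> sets lebesgue" and abc: "a \<le> b" "b \<le> c"
  shows "measure lebesgue (G \<inter> {a<..<c}) = measure lebesgue (G \<inter> {a<..<b}) + measure lebesgue (G \<inter> {b<..<c})"
proof -
  have eq: "G \<inter> {a<..<c} = ((G \<inter> {a<..<b}) \<union> (G \<inter> {b<..<c})) \<union> (G \<inter> {b} \<inter> {a<..<c})"
    using abc by auto
  have fm1: "G \<inter> {a<..<b} \<in> lmeasurable" "G \<inter> {b<..<c} \<in> lmeasurable"
    using Gint_lmeas[OF G] by auto
  have nul: "G \<inter> {b} \<inter> {a<..<c} \<in> null_sets lebesgue"
  proof -
    have "negligible (G \<inter> {b} \<inter> {a<..<c})" by (rule negligible_subset[OF negligible_sing[of b]]) auto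
    then show ?thesis using negligible_iff_null_sets by blast
  qed
  have "measure lebesgue (G \<inter> {a<..<c}) = measure lebesgue ((G \<inter> {a<..<b}) \<union> (G \<inter> {b<..<c}))"
    by (subst eq, rule measure_Un_null_set) (use fm1 nul in auto)
  also have "\<dots> = measure lebesgue (G \<inter> {a<..<b}) + measure lebesgue (G \<inter> {b<..<c})"
    by (rule measure_Union) (use fm1 in \<open>auto simp: fmeasurable_def\<close>)
  finally show ?thesis .
qed

lemma Phi_le:
  fixes G :: "real set"
  assumes G: "G \<in> sets lebesgue" and ab: "a \<le> b"
  shows "measure lebesgue (G \<inter> {a<..<b}) \<le> b - a"
proof -
  have "measure lebesgue (G \<inter> {a<..<b}) \<le> measure lebesgue {a<..<b}"
    by (rule measure_mono_fmeasurable) (use Gint_lmeas[OF G] in auto)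
  then show ?thesis using ab by simp
qed

lemma Phi_full:
  fixes G :: "real set"
  assumes "{a<..<b} \<subseteq> G" "a \<le> b"
  shows "measure lebesgue (G \<inter> {a<..<b}) = b - a"
proof -
  have "G \<inter> {a<..<b} = {a<..<b}" using assms by auto
  then show ?thesis using assms by simp
qed

lemma Phi_closed:
  fixes G :: "real set"
  assumes G: "G \<in> sets lebesgue"
  shows "measure lebesgue (G \<inter> {a..b}) = measure lebesgue (G \<inter> {a<..<b})"
proof -
  have eq: "G \<inter> {a..b} = (G \<inter> {a<..<b}) \<union> (G \<inter> {a..b} \<inter> {a,b})" by auto
  have nul: "G \<inter> {a..b} \<inter> {a,b} \<in> null_sets lebesgue"
  proof -
    have "negligible (G \<inter> {a..b} \<inter> {a,b})" by (rule negligible_subset[OF negligible_finite[of "{a,b}"]]) auto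
    then show ?thesis using negligible_iff_null_sets by blast
  qed
  show ?thesis by (subst eq, rule measure_Un_null_set) (use Gint_lmeas[OF G] nul in auto)
qed

lemma Fdiff:
  fixes G :: "real set"
  assumes G: "G \<in> sets lebesgue" and xy: "x \<le> y"
  shows "(LINT t=ereal e..ereal y|lebesgue. indicator G t) - (LINT t=ereal e..ereal x|lebesgue. indicator G t)
     = measure lebesgue (G \<inter> {x<..<y})"
proof -
  consider "e \<le> x" | "x < e" "e \<le> y" | "y < e" using xy by linarith
  then show ?thesis
  proof cases
    case 1 then show ?thesis using Phi_add[OF G 1 xy] xy by (simp add: LINT_ind[OF G])
  next
    case 2 then show ?thesis using Phi_add[OF G _ 2(2), of x] by (simp add: LINT_ind[OF G])
  next
    case 3 then show ?thesis using Phi_add[OF G xy, of e] xy by (simp add: LINT_ind[OF G])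
  qed
qed

lemma ae_eq_negl: "ae_eq A B \<longleftrightarrow> negligible ((A - B) \<union> (B - A))"
  by (simp add: ae_eq_def negligible_iff_null_sets)

lemma deriv_local:
  fixes G :: "real set" and F :: "real \<Rightarrow> real"
  assumes G: "G \<in> sets lebesgue"
    and P: "\<forall>(F::real\<Rightarrow>real) (\<rho>::real). \<rho> > 0 \<longrightarrow>
     (\<forall>a b. a \<le> b \<longrightarrow> a \<in> ball x \<rho> \<longrightarrow> b \<in> ball x \<rho> \<longrightarrow> F b - F a = measure lebesgue (G \<inter> {a<..<b}))
     \<longrightarrow> (F has_real_derivative indicator G x) (at x)"
    and \<rho>: "\<rho> > 0" "ball x \<rho> \<subseteq> intI E"
    and inc: "\<And>a b. a \<in> intI E \<Longrightarrow> b \<in> intI E \<Longrightarrow> a \<le> b \<Longrightarrow> F b - F a = measure lebesgue (G \<inter> {a<..<b})"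
  shows "(F has_real_derivative indicator G x) (at x)"
  using P \<rho> inc by blast

lemma uniq_rep:
  fixes G1 G2 :: "real set"
  assumes G1: "G1 \<in> sets lebesgue" "G1 \<subseteq> intI E" and G2: "G2 \<in> sets lebesgue" "G2 \<subseteq> intI E"
    and eq: "\<forall>x\<in>intI E. (LINT t=ereal e..ereal x|lebesgue. (indicator G1 t :: real)) = (LINT t=ereal e..ereal x|lebesgue. indicator G2 t)"
  shows "ae_eq G1 G2"
proof -
  define F where "F x = (LINT t=ereal e..ereal x|lebesgue. (indicator G1 t :: real))" for x
  have inc1: "F b - F a = measure lebesgue (G1 \<inter> {a<..<b})" if "a \<in> intI E" "b \<in> intI E" "a \<le> b" for a b
    using Fdiff[OF G1(1) that(3)] by (simp add: F_def)
  have inc2: "F b - F a = measure lebesgue (G2 \<inter> {a<..<b})" if "a \<in> intI E" "b \<in> intI E" "a \<le> b" for a b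
    using Fdiff[OF G2(1) that(3)] eq that by (simp add: F_def)
  define B where "B = intI E - {x. lend E < ereal x \<and> ereal x < rend E}"
  have Bnull: "B \<in> null_sets lebesgue"
    using negligible_finite[OF I_boundary_finite[of E]] unfolding negligible_iff_null_sets B_def .
  define P where "P G x \<longleftrightarrow> (\<forall>(F::real\<Rightarrow>real) (\<rho>::real). \<rho> > 0 \<longrightarrow>
     (\<forall>a b. a \<le> b \<longrightarrow> a \<in> ball x \<rho> \<longrightarrow> b \<in> ball x \<rho> \<longrightarrow> F b - F a = measure lebesgue (G \<inter> {a<..<b}))
     \<longrightarrow> (F has_real_derivative indicator G x) (at x))" for G x
  have AE: "AE x in lebesgue. P G1 x \<and> P G2 x \<and> x \<notin> B"
    using AE_deriv_indicator[OF G1(1)] AE_deriv_indicator[OF G2(1)] AE_not_in[OF Bnull]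
    unfolding P_def by eventually_elim blast
  then obtain N where N: "N \<in> null_sets lebesgue" and Nsub: "{x \<in> space lebesgue. \<not> (P G1 x \<and> P G2 x \<and> x \<notin> B)} \<subseteq> N"
    unfolding eventually_ae_filter by blast
  have sub: "(G1 - G2) \<union> (G2 - G1) \<subseteq> N"
  proof
    fix x assume x: "x \<in> (G1 - G2) \<union> (G2 - G1)"
    show "x \<in> N"
    proof (rule ccontr)
      assume "x \<notin> N"
      then have "P G1 x" "P G2 x" and xB: "x \<notin> B" using Nsub by auto
      then have P1: "\<forall>(F::real\<Rightarrow>real) (\<rho>::real). \<rho> > 0 \<longrightarrow>
         (\<forall>a b. a \<le> b \<longrightarrow> a \<in> ball x \<rho> \<longrightarrow> b \<in> ball x \<rho> \<longrightarrow> F b - F a = measure lebesgue (G1 \<inter> {a<..<b}))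
         \<longrightarrow> (F has_real_derivative indicator G1 x) (at x)"
        and P2: "\<forall>(F::real\<Rightarrow>real) (\<rho>::real). \<rho> > 0 \<longrightarrow>
         (\<forall>a b. a \<le> b \<longrightarrow> a \<in> ball x \<rho> \<longrightarrow> b \<in> ball x \<rho> \<longrightarrow> F b - F a = measure lebesgue (G2 \<inter> {a<..<b}))
         \<longrightarrow> (F has_real_derivative indicator G2 x) (at x)"
        unfolding P_def by blast+
      have xI: "x \<in> intI E" using x G1(2) G2(2) by auto
      then have "lend E < ereal x" "ereal x < rend E" using xB by (auto simp: B_def)
      then obtain \<rho> where \<rho>: "\<rho> > 0" "ball x \<rho> \<subseteq> intI E" by (rule inner_ball)
      have d1: "(F has_real_derivative indicator G1 x) (at x)"
        by (rule deriv_local[OF G1(1) P1 \<rho> inc1])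
      have d2: "(F has_real_derivative indicator G2 x) (at x)"
        by (rule deriv_local[OF G2(1) P2 \<rho> inc2])
      have "indicator G1 x = (indicator G2 x :: real)" using DERIV_unique[OF d1 d2] .
      then show False using x by (auto simp: indicator_def split: if_splits)
    qed
  qed
  have "negligible ((G1 - G2) \<union> (G2 - G1))"
    using negligible_subset[OF _ sub] N negligible_iff_null_sets by blast
  then show ?thesis by (simp add: ae_eq_negl)
qed

lemma ball_Ioo_sub:
  fixes a b c r :: real
  assumes "a \<in> ball c r" "b \<in> ball c (r::real)" shows "{a<..<b} \<subseteq> ball c r"
proof
  fix x assume "x \<in> {a<..<b}"
  then show "x \<in> ball c r" using assms unfolding mem_ball dist_real_def abs_less_iff by auto
qed

lemma sbar_of_H:
  assumes K: "classK E" and Gb: "Gb \<in> Hbar E" and e: "e \<in> intI E"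
    and rep: "\<forall>x\<in>intI E. sb x = sb e + (LINT y=ereal e..ereal x|lebesgue. indicator Gb y)"
  shows "sb \<in> Sbar E"
proof -
  have Gm: "Gb \<in> sets lebesgue" "Gb \<subseteq> intI E" "intI E - E \<subseteq> Gb"
    and pos: "\<And>c d. c < d \<Longrightarrow> {c<..<d} \<subseteq> intI E \<Longrightarrow> emeasure lebesgue (Gb \<inter> {c<..<d}) > 0"
    using Gb by (auto simp: Hbar_def)
  have inc: "sb b - sb a = measure lebesgue (Gb \<inter> {a<..<b})" if "a \<in> intI E" "b \<in> intI E" "a \<le> b" for a b
  proof -
    have "sb b - sb a = (LINT y=ereal e..ereal b|lebesgue. indicator Gb y) - (LINT y=ereal e..ereal a|lebesgue. indicator Gb y)"
      using rep that by simp
    also have "\<dots> = measure lebesgue (Gb \<inter> {a<..<b})" by (rule Fdiff[OF Gm(1) that(3)])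
    finally show ?thesis .
  qed
  have AC: "loc_abs_cont_on (intI E) sb"
    unfolding loc_abs_cont_on_def abs_cont_on_def
  proof (intro allI impI)
    fix a b \<epsilon> :: real assume ab: "{a..b} \<subseteq> intI E" and \<epsilon>: "\<epsilon> > 0"
    show "\<exists>\<delta>>0. \<forall>(n::nat) (a0::nat \<Rightarrow> real) (b0::nat \<Rightarrow> real).
        (\<forall>i<n. a0 i \<le> b0 i \<and> {a0 i..b0 i} \<subseteq> {a..b}) \<and>
        (\<forall>i<n. \<forall>j<n. i \<noteq> j \<longrightarrow> b0 i \<le> a0 j \<or> b0 j \<le> a0 i) \<and>
        (\<Sum>i<n. b0 i - a0 i) < \<delta>
        \<longrightarrow> (\<Sum>i<n. \<bar>sb (b0 i) - sb (a0 i)\<bar>) < \<epsilon>"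
    proof (intro exI[of _ \<epsilon>] conjI allI impI)
      fix n :: nat and a0 b0 :: "nat \<Rightarrow> real"
      assume H: "(\<forall>i<n. a0 i \<le> b0 i \<and> {a0 i..b0 i} \<subseteq> {a..b}) \<and>
        (\<forall>i<n. \<forall>j<n. i \<noteq> j \<longrightarrow> b0 i \<le> a0 j \<or> b0 j \<le> a0 i) \<and>
        (\<Sum>i<n. b0 i - a0 i) < \<epsilon>"
      have "(\<Sum>i<n. \<bar>sb (b0 i) - sb (a0 i)\<bar>) \<le> (\<Sum>i<n. b0 i - a0 i)"
      proof (rule sum_mono)
        fix i assume "i \<in> {..<n}"
        then have i1: "a0 i \<le> b0 i" and i2: "{a0 i..b0 i} \<subseteq> {a..b}" using H by auto
        then have i3: "a0 i \<in> intI E" "b0 i \<in> intI E" using ab by auto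
        show "\<bar>sb (b0 i) - sb (a0 i)\<bar> \<le> b0 i - a0 i"
          using inc[OF i3 i1] Phi_le[OF Gm(1) i1] by simp
      qed
      then show "(\<Sum>i<n. \<bar>sb (b0 i) - sb (a0 i)\<bar>) < \<epsilon>" using H by linarith
    qed (use \<epsilon> in auto)
  qed
  have SM: "strict_mono_on (intI E) sb"
  proof (rule strict_mono_onI)
    fix x y assume xy: "x \<in> intI E" "y \<in> intI E" "x < y"
    have "emeasure lebesgue (Gb \<inter> {x<..<y}) > 0" using pos[OF xy(3) Ioo_sub_I[OF xy(1,2)]] .
    then have "measure lebesgue (Gb \<inter> {x<..<y}) > 0"
      using emeasure_eq_measure2[OF Gint_lmeas(1)[OF Gm(1)]] by simp
    then show "sb x < sb y" using inc[OF xy(1,2)] xy(3) by simp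
  qed
  define B where "B = intI E - {x. lend E < ereal x \<and> ereal x < rend E}"
  have Bnull: "B \<in> null_sets lebesgue"
    using negligible_finite[OF I_boundary_finite[of E]] unfolding negligible_iff_null_sets B_def .
  have DER: "AE x in lebesgue. x \<in> intI E \<longrightarrow>
        ((sb has_real_derivative 0) (at x within intI E) \<or> (sb has_real_derivative 1) (at x within intI E))"
    using AE_deriv_indicator[OF Gm(1)] AE_not_in[OF Bnull]
  proof eventually_elim
    case (elim x)
    show ?case
    proof
      assume xI: "x \<in> intI E"
      then have "lend E < ereal x" "ereal x < rend E" using elim(2) by (auto simp: B_def)
      then obtain \<rho> where \<rho>: "\<rho> > 0" "ball x \<rho> \<subseteq> intI E" by (rule inner_ball)
      have "(sb has_real_derivative indicator Gb x) (at x)"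
        by (rule deriv_local[OF Gm(1) elim(1) \<rho> inc])
      then have "(sb has_real_derivative indicator Gb x) (at x within intI E)"
        by (rule has_field_derivative_at_within)
      then show "(sb has_real_derivative 0) (at x within intI E) \<or> (sb has_real_derivative 1) (at x within intI E)"
        by (cases "x \<in> Gb") auto
    qed
  qed
  have D1: "\<forall>x\<in>intI E - E. (sb has_real_derivative 1) (at x within intI E)"
  proof
    fix x assume x: "x \<in> intI E - E"
    obtain \<rho> where \<rho>: "\<rho> > 0" "ball x \<rho> \<subseteq> intI E - E"
      by (rule openE[OF open_I_minus_E[OF K] x]) blast
    have xI: "x \<in> intI E" using x by auto
    have eqb: "sb x + (y - x) = sb y" if y: "y \<in> ball x \<rho>" for y
    proof -
      have yI: "y \<in> intI E" using y \<rho> by auto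
      have xb: "x \<in> ball x \<rho>" using \<rho> by simp
      show ?thesis
      proof (cases "x \<le> y")
        case True
        have "{x<..<y} \<subseteq> Gb" using ball_Ioo_sub[OF xb y] \<rho> Gm(3) by blast
        then show ?thesis using inc[OF xI yI True] Phi_full[of x y Gb] True by simp
      next
        case False
        have "{y<..<x} \<subseteq> Gb" using ball_Ioo_sub[OF y xb] \<rho> Gm(3) by blast
        then show ?thesis using inc[OF yI xI] Phi_full[of y x Gb] False by simp
      qed
    qed
    have "((\<lambda>y. sb x + (y - x)) has_real_derivative 1) (at x)"
      by (auto intro!: derivative_eq_intros)
    then have "(sb has_real_derivative 1) (at x)"
      by (rule has_field_derivative_transform_within_open[OF _ open_ball]) (use \<rho> eqb in auto)
    then show "(sb has_real_derivative 1) (at x within intI E)" by (rule has_field_derivative_at_within)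
  qed
  show ?thesis unfolding Sbar_def using AC SM DER D1 by blast
qed

lemma meas_from_pieces:
  assumes S: "S \<subseteq> intI E" and P: "\<And>x y. x \<in> intI E \<Longrightarrow> y \<in> intI E \<Longrightarrow> x \<le> y \<Longrightarrow> S \<inter> {x..y} \<in> sets lebesgue"
  shows "S \<in> sets lebesgue"
proof -
  define Q where "Q = {(x,y). x \<in> intI E \<and> y \<in> intI E \<and> x \<le> y \<and> x \<in> \<rat> \<and> y \<in> \<rat>}"
  define T where "T = \<Union>((\<lambda>(x,y). S \<inter> {x..y}) ` Q)"
  have cQ: "countable Q"
  proof (rule countable_subset)
    show "Q \<subseteq> (\<rat>::real set) \<times> (\<rat>::real set)" by (auto simp: Q_def)
    show "countable ((\<rat>::real set) \<times> (\<rat>::real set))" using countable_rat by (intro countable_SIGMA) auto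
  qed
  have Tm: "T \<in> sets lebesgue"
    unfolding T_def by (rule sets.countable_Union) (use cQ P in \<open>auto simp: Q_def\<close>)
  define B where "B = intI E - {x. lend E < ereal x \<and> ereal x < rend E}"
  have STB: "S - T \<subseteq> B"
  proof
    fix z assume z: "z \<in> S - T"
    show "z \<in> B"
    proof (rule ccontr)
      assume "z \<notin> B"
      then have "lend E < ereal z" "ereal z < rend E" using z S by (auto simp: B_def)
      then obtain \<rho> where \<rho>: "\<rho> > 0" "ball z \<rho> \<subseteq> intI E" by (rule inner_ball)
      obtain q1 where q1: "q1 \<in> \<rat>" "z - \<rho> < q1" "q1 < z" using Rats_dense_in_real[of "z - \<rho>" z] \<rho> by auto
      obtain q2 where q2: "q2 \<in> \<rat>" "z < q2" "q2 < z + \<rho>" using Rats_dense_in_real[of z "z + \<rho>"] \<rho> by auto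
      have "q1 \<in> ball z \<rho>" "q2 \<in> ball z \<rho>" using q1 q2 by (auto simp: dist_real_def)
      then have "(q1, q2) \<in> Q" using \<rho> q1 q2 by (auto simp: Q_def)
      moreover have "z \<in> S \<inter> {q1..q2}" using z q1 q2 by auto
      ultimately have "z \<in> T" unfolding T_def by blast
      then show False using z by blast
    qed
  qed
  have nB: "negligible B" unfolding B_def by (rule negligible_finite[OF I_boundary_finite])
  have "negligible (S - T)" by (rule negligible_subset[OF nB STB])
  then have "S - T \<in> sets lebesgue" using negligible_imp_measurable by blast
  then have "T \<union> (S - T) \<in> sets lebesgue" using Tm by blast
  moreover have "T \<union> (S - T) = S" unfolding T_def by auto
  ultimately show ?thesis by simp
qed

lemma H_of_sbar:
  assumes K: "classK E" and sb: "sb \<in> Sbar E" and e: "e \<in> intI E"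
  defines "D1 \<equiv> {z \<in> intI E. (sb has_real_derivative 1) (at z within intI E)}"
  shows "D1 \<in> Hbar E \<and> (\<forall>x\<in>intI E. sb x = sb e + (LINT y=ereal e..ereal x|lebesgue. indicator D1 y))"
proof -
  have AC: "loc_abs_cont_on (intI E) sb" and SM: "strict_mono_on (intI E) sb"
    and DER: "AE x in lebesgue. x \<in> intI E \<longrightarrow>
        ((sb has_real_derivative 0) (at x within intI E) \<or> (sb has_real_derivative 1) (at x within intI E))"
    and DE: "\<forall>x \<in> intI E - E. (sb has_real_derivative 1) (at x within intI E)"
    using sb by (auto simp: Sbar_def)
  obtain N where N: "N \<in> null_sets lebesgue" and Nsub: "{x \<in> space lebesgue. \<not> (x \<in> intI E \<longrightarrow>
        ((sb has_real_derivative 0) (at x within intI E) \<or> (sb has_real_derivative 1) (at x within intI E)))} \<subseteq> N"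
    using DER unfolding eventually_ae_filter by blast
  have Nn: "negligible N" using N negligible_iff_null_sets by blast
  have der': "(sb has_real_derivative 0) (at z within intI E) \<or> (sb has_real_derivative 1) (at z within intI E)"
    if "z \<in> intI E - N" for z
  proof -
    have "z \<notin> N" using that by blast
    then have "z \<notin> {x \<in> space lebesgue. \<not> (x \<in> intI E \<longrightarrow>
        ((sb has_real_derivative 0) (at x within intI E) \<or> (sb has_real_derivative 1) (at x within intI E)))}"
      using Nsub by blast
    then show ?thesis using that by simp
  qed
  have piece: "D1 \<inter> {x..y} \<in> lmeasurable \<and> sb y - sb x = measure lebesgue (D1 \<inter> {x..y})"
    if xy: "x \<in> intI E" "y \<in> intI E" "x \<le> y" for x y
  proof -
    have ac: "abs_cont_on {x..y} sb" using AC Icc_sub_I[OF xy(1,2)] by (auto simp: loc_abs_cont_on_def)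
    show ?thesis unfolding D1_def by (rule ftc_piece[OF xy(3) Icc_sub_I[OF xy(1,2)] ac SM Nn der'])
  qed
  have D1sub: "D1 \<subseteq> intI E" by (auto simp: D1_def)
  have D1m: "D1 \<in> sets lebesgue"
    by (rule meas_from_pieces[OF D1sub]) (use piece in blast)
  have IE: "intI E - E \<subseteq> D1" using DE by (auto simp: D1_def)
  have pos: "emeasure lebesgue (D1 \<inter> {c<..<d}) > 0" if cd: "c < d" "{c<..<d} \<subseteq> intI E" for c d
  proof -
    define c' where "c' = (2*c + d)/3"
    define d' where "d' = (c + 2*d)/3"
    have cc: "c < c'" "c' < d'" "d' < d" using cd by (auto simp: c'_def d'_def)
    then have cI: "c' \<in> intI E" "d' \<in> intI E" using cd by auto
    have p: "D1 \<inter> {c'..d'} \<in> lmeasurable" "sb d' - sb c' = measure lebesgue (D1 \<inter> {c'..d'})"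
      using piece[OF cI] cc by auto
    have "sb c' < sb d'" using SM cI cc by (auto intro: strict_mono_onD)
    then have "measure lebesgue (D1 \<inter> {c'..d'}) > 0" using p by simp
    then have "emeasure lebesgue (D1 \<inter> {c'..d'}) > 0" using emeasure_eq_measure2[OF p(1)] by simp
    also have "emeasure lebesgue (D1 \<inter> {c'..d'}) \<le> emeasure lebesgue (D1 \<inter> {c<..<d})"
      by (rule emeasure_mono) (use cc D1m in auto)
    finally show ?thesis .
  qed
  have H: "D1 \<in> Hbar E" unfolding Hbar_def using D1m D1sub IE pos by blast
  have rep: "sb x = sb e + (LINT y=ereal e..ereal x|lebesgue. indicator D1 y)" if x: "x \<in> intI E" for x
  proof (cases "e \<le> x")
    case True
    have "sb x - sb e = measure lebesgue (D1 \<inter> {e..x})" using piece[OF e x True] by simp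
    also have "\<dots> = measure lebesgue (D1 \<inter> {e<..<x})" by (rule Phi_closed[OF D1m])
    finally show ?thesis using True by (simp add: LINT_ind[OF D1m])
  next
    case False
    have "sb e - sb x = measure lebesgue (D1 \<inter> {x..e})" using piece[OF x e] False by simp
    also have "\<dots> = measure lebesgue (D1 \<inter> {x<..<e})" by (rule Phi_closed[OF D1m])
    finally show ?thesis using False by (simp add: LINT_ind[OF D1m])
  qed
  show ?thesis using H rep by blast
qed

lemma Hbar_facts:
  assumes "G0 \<in> Hbar E"
  shows "G0 \<in> sets lebesgue" "G0 \<subseteq> intI E" "intI E - E \<subseteq> G0" "(G0 \<inter> E) \<union> (intI E - E) = G0"
  using assms by (auto simp: Hbar_def)

lemma gap_step:
  assumes K: "classK E" and G0: "G0 \<in> Hbar E" and x: "x \<in> intI E - E"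
  defines "a \<equiv> Sup {y\<in>E. y<x}" and "b \<equiv> Inf {y\<in>E. x<y}"
  shows "a \<in> E" "b \<in> E" "a < x" "x < b"
    "(LINT t=ereal e..ereal x|lebesgue. indicator G0 t) = (LINT t=ereal e..ereal a|lebesgue. indicator G0 t) + (x - a)"
    "(LINT t=ereal e..ereal b|lebesgue. indicator G0 t) = (LINT t=ereal e..ereal a|lebesgue. indicator G0 t) + (b - a)"
proof -
  note g = gap[OF K x]
  show aE: "a \<in> E" and bE: "b \<in> E" and ax: "a < x" and xb: "x < b" using g by (simp_all add: a_def b_def)
  have none: "\<forall>y\<in>E. \<not> (a < y \<and> y < b)" using g by (simp add: a_def b_def)
  have aI: "a \<in> intI E" and bI: "b \<in> intI E" using aE bE E_sub_I by auto
  have abG: "{a<..<b} \<subseteq> G0"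
  proof -
    have "{a<..<b} \<subseteq> intI E" using Ioo_sub_I[OF aI bI] .
    moreover have "{a<..<b} \<inter> E = {}" using none by auto
    ultimately show ?thesis using Hbar_facts(3)[OF G0] by blast
  qed
  have G0m: "G0 \<in> sets lebesgue" using Hbar_facts(1)[OF G0] .
  have axG: "{a<..<x} \<subseteq> G0" using abG xb by auto
  have "(LINT t=ereal e..ereal x|lebesgue. indicator G0 t) - (LINT t=ereal e..ereal a|lebesgue. indicator G0 t) = x - a"
    using Fdiff[OF G0m, of a x e] ax Phi_full[OF axG] by auto
  then show "(LINT t=ereal e..ereal x|lebesgue. indicator G0 t) = (LINT t=ereal e..ereal a|lebesgue. indicator G0 t) + (x - a)"
    by simp
  have "(LINT t=ereal e..ereal b|lebesgue. indicator G0 t) - (LINT t=ereal e..ereal a|lebesgue. indicator G0 t) = b - a"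
    using Fdiff[OF G0m, of a b e] ax xb Phi_full[OF abG] by auto
  then show "(LINT t=ereal e..ereal b|lebesgue. indicator G0 t) = (LINT t=ereal e..ereal a|lebesgue. indicator G0 t) + (b - a)"
    by simp
qed

lemma agree_on_I:
  assumes K: "classK E" and G1: "G1 \<in> Hbar E" and G2: "G2 \<in> Hbar E"
    and eq: "\<forall>x\<in>E. (LINT t=ereal e..ereal x|lebesgue. (indicator G1 t::real)) = (LINT t=ereal e..ereal x|lebesgue. indicator G2 t)"
  shows "\<forall>x\<in>intI E. (LINT t=ereal e..ereal x|lebesgue. (indicator G1 t::real)) = (LINT t=ereal e..ereal x|lebesgue. indicator G2 t)"
proof
  fix x assume x: "x \<in> intI E"
  show "(LINT t=ereal e..ereal x|lebesgue. (indicator G1 t::real)) = (LINT t=ereal e..ereal x|lebesgue. indicator G2 t)"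
  proof (cases "x \<in> E")
    case True then show ?thesis using eq by blast
  next
    case False
    then have xx: "x \<in> intI E - E" using x by blast
    note s0 = gap_step(1)[OF K G1 xx]
    note s1 = gap_step(5)[OF K G1 xx, where e=e] and s2 = gap_step(5)[OF K G2 xx, where e=e]
    show ?thesis using s0 s1 s2 eq by simp
  qed
qed

lemma ae_eq_IntE: "ae_eq A B \<Longrightarrow> ae_eq (A \<inter> E) (B \<inter> E)"
  unfolding ae_eq_negl by (erule negligible_subset) auto

lemma ae_eq_sym: "ae_eq A B \<Longrightarrow> ae_eq B A"
  unfolding ae_eq_negl by (simp add: Un_commute)

lemma LINT_self: "(LINT t=ereal e..ereal e|lebesgue. (indicator G t::real)) = 0"
  unfolding interval_lebesgue_integral_def set_lebesgue_integral_def einterval_eq_Icc by simp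

theorem lemma5p1:
  fixes E :: "real set"
  assumes "classK E"
  shows
   "(\<forall>e \<in> E. \<forall>s. s \<in> Sc E \<longleftrightarrow>
       (\<exists>G \<in> Hc E.
          (\<forall>x \<in> E. s x = s e + (LINT y=ereal e..ereal x|lebesgue. indicator (G \<union> (intI E - E)) y)) \<and>
          (\<forall>G' \<in> Hc E.
             (\<forall>x \<in> E. s x = s e + (LINT y=ereal e..ereal x|lebesgue. indicator (G' \<union> (intI E - E)) y))
             \<longrightarrow> ae_eq G' G))) \<and>
    (\<forall>e \<in> intI E. \<forall>sb. sb \<in> Sbar E \<longleftrightarrow>
       (\<exists>Gb \<in> Hbar E.
          (\<forall>x \<in> intI E. sb x = sb e + (LINT y=ereal e..ereal x|lebesgue. indicator Gb y)) \<and>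
          (\<forall>Gb' \<in> Hbar E.
             (\<forall>x \<in> intI E. sb x = sb e + (LINT y=ereal e..ereal x|lebesgue. indicator Gb' y))
             \<longrightarrow> ae_eq Gb' Gb))) \<and>
    (\<forall>e \<in> E. \<forall>s sb G Gb.
       s \<in> Sc E \<and> sb \<in> Sbar E \<and> (\<forall>x \<in> intI E. sb x = ext_scale E s x) \<and>
       G \<in> Hc E \<and>
       (\<forall>x \<in> E. s x = s e + (LINT y=ereal e..ereal x|lebesgue. indicator (G \<union> (intI E - E)) y)) \<and>
       Gb \<in> Hbar E \<and>
       (\<forall>x \<in> intI E. sb x = sb e + (LINT y=ereal e..ereal x|lebesgue. indicator Gb y))
       \<longrightarrow> ae_eq Gb (G \<union> (intI E - E)) \<and> ae_eq G (Gb \<inter> E))"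
proof -
  have K: "classK E" by (rule assms)
  have P2: "\<forall>e \<in> intI E. \<forall>sb. sb \<in> Sbar E \<longleftrightarrow>
       (\<exists>Gb \<in> Hbar E.
          (\<forall>x \<in> intI E. sb x = sb e + (LINT y=ereal e..ereal x|lebesgue. indicator Gb y)) \<and>
          (\<forall>Gb' \<in> Hbar E.
             (\<forall>x \<in> intI E. sb x = sb e + (LINT y=ereal e..ereal x|lebesgue. indicator Gb' y))
             \<longrightarrow> ae_eq Gb' Gb))"
  proof (intro ballI allI)
    fix e and sb :: "real \<Rightarrow> real" assume e: "e \<in> intI E"
    show "sb \<in> Sbar E \<longleftrightarrow>
       (\<exists>Gb \<in> Hbar E.
          (\<forall>x \<in> intI E. sb x = sb e + (LINT y=ereal e..ereal x|lebesgue. indicator Gb y)) \<and>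
          (\<forall>Gb' \<in> Hbar E.
             (\<forall>x \<in> intI E. sb x = sb e + (LINT y=ereal e..ereal x|lebesgue. indicator Gb' y))
             \<longrightarrow> ae_eq Gb' Gb))"
    proof
      assume sb: "sb \<in> Sbar E"
      define D1 where "D1 = {z \<in> intI E. (sb has_real_derivative 1) (at z within intI E)}"
      have H: "D1 \<in> Hbar E" and rep: "\<forall>x\<in>intI E. sb x = sb e + (LINT y=ereal e..ereal x|lebesgue. indicator D1 y)"
        using H_of_sbar[OF K sb e] unfolding D1_def by blast+
      show "\<exists>Gb \<in> Hbar E.
          (\<forall>x \<in> intI E. sb x = sb e + (LINT y=ereal e..ereal x|lebesgue. indicator Gb y)) \<and>
          (\<forall>Gb' \<in> Hbar E.
             (\<forall>x \<in> intI E. sb x = sb e + (LINT y=ereal e..ereal x|lebesgue. indicator Gb' y))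
             \<longrightarrow> ae_eq Gb' Gb)"
      proof (intro bexI[of _ D1] conjI ballI impI)
        fix Gb' assume Gb': "Gb' \<in> Hbar E"
          and rep': "\<forall>x \<in> intI E. sb x = sb e + (LINT y=ereal e..ereal x|lebesgue. indicator Gb' y)"
        have eqI: "\<forall>x\<in>intI E. (LINT y=ereal e..ereal x|lebesgue. (indicator Gb' y :: real)) = (LINT y=ereal e..ereal x|lebesgue. indicator D1 y)"
          using rep rep' by (metis add_left_cancel)
        show "ae_eq Gb' D1"
          by (rule uniq_rep[OF Hbar_facts(1,2)[OF Gb'] Hbar_facts(1,2)[OF H] eqI])
      qed (use H rep in auto)
    next
      assume "\<exists>Gb \<in> Hbar E.
          (\<forall>x \<in> intI E. sb x = sb e + (LINT y=ereal e..ereal x|lebesgue. indicator Gb y)) \<and>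
          (\<forall>Gb' \<in> Hbar E.
             (\<forall>x \<in> intI E. sb x = sb e + (LINT y=ereal e..ereal x|lebesgue. indicator Gb' y))
             \<longrightarrow> ae_eq Gb' Gb)"
      then obtain Gb where Gb: "Gb \<in> Hbar E"
        and rep: "\<forall>x \<in> intI E. sb x = sb e + (LINT y=ereal e..ereal x|lebesgue. indicator Gb y)" by blast
      show "sb \<in> Sbar E" by (rule sbar_of_H[OF K Gb e rep])
    qed
  qed
  have P1: "\<forall>e \<in> E. \<forall>s. s \<in> Sc E \<longleftrightarrow>
       (\<exists>G \<in> Hc E.
          (\<forall>x \<in> E. s x = s e + (LINT y=ereal e..ereal x|lebesgue. indicator (G \<union> (intI E - E)) y)) \<and>
          (\<forall>G' \<in> Hc E.
             (\<forall>x \<in> E. s x = s e + (LINT y=ereal e..ereal x|lebesgue. indicator (G' \<union> (intI E - E)) y))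
             \<longrightarrow> ae_eq G' G))"
  proof (intro ballI allI)
    fix e and s :: "real \<Rightarrow> real" assume e: "e \<in> E"
    have eI: "e \<in> intI E" using e E_sub_I by blast
    show "s \<in> Sc E \<longleftrightarrow>
       (\<exists>G \<in> Hc E.
          (\<forall>x \<in> E. s x = s e + (LINT y=ereal e..ereal x|lebesgue. indicator (G \<union> (intI E - E)) y)) \<and>
          (\<forall>G' \<in> Hc E.
             (\<forall>x \<in> E. s x = s e + (LINT y=ereal e..ereal x|lebesgue. indicator (G' \<union> (intI E - E)) y))
             \<longrightarrow> ae_eq G' G))"
    proof
      assume "s \<in> Sc E"
      then obtain sb where sb: "sb \<in> Sbar E" and seq: "\<forall>x\<in>E. s x = sb x" by (auto simp: Sc_def)
      define D1 where "D1 = {z \<in> intI E. (sb has_real_derivative 1) (at z within intI E)}"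
      have H: "D1 \<in> Hbar E" and rep: "\<forall>x\<in>intI E. sb x = sb e + (LINT y=ereal e..ereal x|lebesgue. indicator D1 y)"
        using H_of_sbar[OF K sb eI] unfolding D1_def by blast+
      have U: "(D1 \<inter> E) \<union> (intI E - E) = D1" by (rule Hbar_facts(4)[OF H])
      have GH: "D1 \<inter> E \<in> Hc E" using H by (auto simp: Hc_def)
      have repE: "\<forall>x\<in>E. s x = s e + (LINT y=ereal e..ereal x|lebesgue. indicator D1 y)"
      proof
        fix x assume x: "x \<in> E"
        have "x \<in> intI E" using x E_sub_I by blast
        then show "s x = s e + (LINT y=ereal e..ereal x|lebesgue. indicator D1 y)"
          using rep seq x e by simp
      qed
      show "\<exists>G \<in> Hc E.
          (\<forall>x \<in> E. s x = s e + (LINT y=ereal e..ereal x|lebesgue. indicator (G \<union> (intI E - E)) y)) \<and>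
          (\<forall>G' \<in> Hc E.
             (\<forall>x \<in> E. s x = s e + (LINT y=ereal e..ereal x|lebesgue. indicator (G' \<union> (intI E - E)) y))
             \<longrightarrow> ae_eq G' G)"
      proof (intro bexI[of _ "D1 \<inter> E"] conjI ballI impI)
        fix x assume x: "x \<in> E"
        show "s x = s e + (LINT y=ereal e..ereal x|lebesgue. indicator ((D1 \<inter> E) \<union> (intI E - E)) y)"
          unfolding U using repE x by blast
      next
        fix G' assume G': "G' \<in> Hc E"
          and rep': "\<forall>x \<in> E. s x = s e + (LINT y=ereal e..ereal x|lebesgue. indicator (G' \<union> (intI E - E)) y)"
        obtain G0 where G0: "G0 \<in> Hbar E" "G' = G0 \<inter> E" using G' by (auto simp: Hc_def)
        have U0: "G' \<union> (intI E - E) = G0" using Hbar_facts(4)[OF G0(1)] G0(2) by simp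
        have eqE: "\<forall>x\<in>E. (LINT y=ereal e..ereal x|lebesgue. (indicator G0 y :: real)) = (LINT y=ereal e..ereal x|lebesgue. indicator D1 y)"
          using rep' repE unfolding U0 by (metis add_left_cancel)
        have eqI: "\<forall>x\<in>intI E. (LINT y=ereal e..ereal x|lebesgue. (indicator G0 y :: real)) = (LINT y=ereal e..ereal x|lebesgue. indicator D1 y)"
          by (rule agree_on_I[OF K G0(1) H eqE])
        have "ae_eq G0 D1"
          by (rule uniq_rep[OF Hbar_facts(1,2)[OF G0(1)] Hbar_facts(1,2)[OF H] eqI])
        then show "ae_eq G' (D1 \<inter> E)" using G0(2) ae_eq_IntE by simp
      qed (use GH in auto)
    next
      assume "\<exists>G \<in> Hc E.
          (\<forall>x \<in> E. s x = s e + (LINT y=ereal e..ereal x|lebesgue. indicator (G \<union> (intI E - E)) y)) \<and>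
          (\<forall>G' \<in> Hc E.
             (\<forall>x \<in> E. s x = s e + (LINT y=ereal e..ereal x|lebesgue. indicator (G' \<union> (intI E - E)) y))
             \<longrightarrow> ae_eq G' G)"
      then obtain G where G: "G \<in> Hc E"
        and rep: "\<forall>x \<in> E. s x = s e + (LINT y=ereal e..ereal x|lebesgue. indicator (G \<union> (intI E - E)) y)" by blast
      obtain G0 where G0: "G0 \<in> Hbar E" "G = G0 \<inter> E" using G by (auto simp: Hc_def)
      have U0: "G \<union> (intI E - E) = G0" using Hbar_facts(4)[OF G0(1)] G0(2) by simp
      define sb where "sb x = s e + (LINT y=ereal e..ereal x|lebesgue. indicator G0 y)" for x
      have sbe: "sb e = s e" by (simp add: sb_def LINT_self)
      have "sb \<in> Sbar E"
        by (rule sbar_of_H[OF K G0(1) eI]) (simp add: sbe, simp add: sb_def)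
      moreover have "\<forall>x\<in>E. s x = sb x" using rep unfolding U0 by (simp add: sb_def)
      ultimately show "s \<in> Sc E" unfolding Sc_def by blast
    qed
  qed
  have P3: "\<forall>e \<in> E. \<forall>s sb G Gb.
       s \<in> Sc E \<and> sb \<in> Sbar E \<and> (\<forall>x \<in> intI E. sb x = ext_scale E s x) \<and>
       G \<in> Hc E \<and>
       (\<forall>x \<in> E. s x = s e + (LINT y=ereal e..ereal x|lebesgue. indicator (G \<union> (intI E - E)) y)) \<and>
       Gb \<in> Hbar E \<and>
       (\<forall>x \<in> intI E. sb x = sb e + (LINT y=ereal e..ereal x|lebesgue. indicator Gb y))
       \<longrightarrow> ae_eq Gb (G \<union> (intI E - E)) \<and> ae_eq G (Gb \<inter> E)"
  proof (intro ballI allI impI)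
    fix e and s sb :: "real \<Rightarrow> real" and G Gb assume e: "e \<in> E"
    assume A: "s \<in> Sc E \<and> sb \<in> Sbar E \<and> (\<forall>x \<in> intI E. sb x = ext_scale E s x) \<and>
       G \<in> Hc E \<and>
       (\<forall>x \<in> E. s x = s e + (LINT y=ereal e..ereal x|lebesgue. indicator (G \<union> (intI E - E)) y)) \<and>
       Gb \<in> Hbar E \<and>
       (\<forall>x \<in> intI E. sb x = sb e + (LINT y=ereal e..ereal x|lebesgue. indicator Gb y))"
    then have ext: "\<forall>x \<in> intI E. sb x = ext_scale E s x" and G: "G \<in> Hc E"
      and repG: "\<forall>x \<in> E. s x = s e + (LINT y=ereal e..ereal x|lebesgue. indicator (G \<union> (intI E - E)) y)"
      and Gb: "Gb \<in> Hbar E"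
      and repGb: "\<forall>x \<in> intI E. sb x = sb e + (LINT y=ereal e..ereal x|lebesgue. indicator Gb y)"
      by blast+
    have eI: "e \<in> intI E" using e E_sub_I by blast
    obtain G0 where G0: "G0 \<in> Hbar E" "G = G0 \<inter> E" using G by (auto simp: Hc_def)
    have U0: "G \<union> (intI E - E) = G0" using Hbar_facts(4)[OF G0(1)] G0(2) by simp
    define L where "L x = (LINT y=ereal e..ereal x|lebesgue. (indicator G0 y :: real))" for x
    have repG0: "\<forall>x\<in>E. s x = s e + L x" using repG unfolding U0 L_def .
    have sbe: "sb e = s e" using ext eI e by (simp add: ext_scale_def)
    have all: "sb x = sb e + L x" if x: "x \<in> intI E" for x
    proof (cases "x \<in> E")
      case True
      then show ?thesis using ext x repG0 sbe by (simp add: ext_scale_def)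
    next
      case False
      then have xx: "x \<in> intI E - E" using x by blast
      define a where "a = Sup {y\<in>E. y<x}"
      define b where "b = Inf {y\<in>E. x<y}"
      have aE: "a \<in> E" and bE: "b \<in> E" and ax: "a < x" and xb: "x < b"
        using gap_step(1-4)[OF K G0(1) xx] by (simp_all add: a_def b_def)
      have Lx: "L x = L a + (x - a)" using gap_step(5)[OF K G0(1) xx, where e=e] by (simp add: L_def a_def)
      have Lb: "L b = L a + (b - a)" using gap_step(6)[OF K G0(1) xx, where e=e] by (simp add: L_def a_def b_def)
      have sba: "s b - s a = b - a" using repG0 aE bE Lb by simp
      have "ext_scale E s x = s a + (s b - s a) * (x - a) / (b - a)"
        using False by (simp add: ext_scale_def Let_def a_def b_def)
      also have "\<dots> = s a + (x - a)" using sba ax xb by simp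
      also have "\<dots> = s e + L x" using repG0 aE Lx by simp
      finally show ?thesis using ext x sbe by simp
    qed
    have eqI: "\<forall>x\<in>intI E. (LINT y=ereal e..ereal x|lebesgue. (indicator Gb y :: real)) = (LINT y=ereal e..ereal x|lebesgue. indicator G0 y)"
      using repGb all unfolding L_def by (metis add_left_cancel)
    have ae: "ae_eq Gb G0"
      by (rule uniq_rep[OF Hbar_facts(1,2)[OF Gb] Hbar_facts(1,2)[OF G0(1)] eqI])
    have "ae_eq G (Gb \<inter> E)" unfolding G0(2) by (rule ae_eq_IntE[OF ae_eq_sym[OF ae]])
    then show "ae_eq Gb (G \<union> (intI E - E)) \<and> ae_eq G (Gb \<inter> E)" using ae U0 by simp
  qed
  show ?thesis using P1 P2 P3 by blast
qed

end
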